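(* Let $H(z)$ be a function analytic at $0$ and let $B(z)=\sum_{n>0}b_nz^n$ be a formal power series whose coefficients satisfy $b_n=0$ for all odd $n$ and, for $n$ even, \[ b_n \approx n^{\alpha n}\beta^n n^\gamma\,\tilde B(n^{-1}) \] for some $\alpha\in\frac12\mathbb{Z}_{>0}$, $\beta\in\mathbb{R}_{>0}$, $\gamma\in\mathbb{R}$ and nonzero formal power series $\tilde B(z)$. Define \[ \tilde B_j(z) = e^{-\alpha j}\beta^{-j} z^{\alpha j}(1-jz)^{\gamma-\alpha j}\, e^{\alpha z^{-1}(\log(1-jz)+jz)}\,\tilde B\!\left(\frac{z}{1-jz}\right), \qquad \tilde B_H(z) = \sum_{j\geq 0}\tilde B_{2j}(z)\,[x^{2j}]H'(B(x)). \] Then, as $n\to\infty$ along even $n$, \[ [z^n]H(B(z)) \approx n^{\alpha n}\beta^n n^\gamma\,\tilde B_H(n^{-1}). \]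
   Context: For a formal power series $\tilde F(z)$, $f_n \approx c_n\tilde F(n^{-1})$ means that for every fixed $r\geq 0$, $f_n = c_n\big(\sum_{\ell=0}^{r-1}[z^\ell]\tilde F(z)\,n^{-\ell} + O(n^{-r})\big)$ as $n\to\infty$ (here along even $n$). $[x^j]F$ denotes the coefficient of $x^j$; $H(B(x))$, $H'(B(x))$ are formal compositions (well defined since $B(0)=0$). *)

theory Defs
  imports "HOL-Analysis.Analysis" "HOL-Library.Landau_Symbols"
begin

text \<open>Asymptotic expansion along even n:
  f_n ~ c_n F(1/n) means: for every r, f_n - c_n * sum_{l<r} F_l n^(-l) = O(|c_n| n^(-r)),
  as n = 2m, m \<rightarrow> \<infinity>.\<close>
definition asymp_exp_even :: "(nat \<Rightarrow> complex) \<Rightarrow> (nat \<Rightarrow> real) \<Rightarrow> complex fps \<Rightarrow> bool" where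
  "asymp_exp_even f c F \<longleftrightarrow>
     (\<forall>r::nat. (\<lambda>m. f (2*m) - complex_of_real (c (2*m)) * (\<Sum>l<r. fps_nth F l / of_nat (2*m) ^ l))
                 \<in> O(\<lambda>m. complex_of_real (c (2*m)) / of_nat (2*m) ^ r))"

text \<open>The scale n^(alpha n) beta^n n^gamma, with alpha = a2/2.\<close>
definition scale :: "nat \<Rightarrow> real \<Rightarrow> real \<Rightarrow> nat \<Rightarrow> real" where
  "scale a2 \<beta> \<gamma> n = real n powr (real a2 / 2 * real n) * \<beta> ^ n * real n powr \<gamma>"

text \<open>Btilde_k for k = 2j (even index), with alpha = a2/2, so that z^(alpha k) = z^(a2 j):
  e^(-alpha k) beta^(-k) z^(alpha k) (1-kz)^(gamma-alpha k)
    exp(alpha z^(-1) (log(1-kz)+kz)) Bt(z/(1-kz)).\<close>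
definition Btilde_even :: "nat \<Rightarrow> real \<Rightarrow> real \<Rightarrow> complex fps \<Rightarrow> nat \<Rightarrow> complex fps" where
  "Btilde_even a2 \<beta> \<gamma> Bt j =
     (let \<alpha> = complex_of_real (real a2 / 2); k = of_nat (2*j) :: complex in
      fps_const (exp (- (\<alpha> * k)) / complex_of_real \<beta> ^ (2*j))
      * fps_X ^ (a2 * j)
      * (fps_binomial (complex_of_real \<gamma> - \<alpha> * k) oo (- fps_const k * fps_X))
      * (fps_exp 1 oo (fps_const \<alpha> *
            fps_shift 1 ((fps_ln 1 oo (- fps_const k * fps_X)) + fps_const k * fps_X)))
      * (Bt oo (fps_X / (1 - fps_const k * fps_X))))"

definition Btilde_H :: "nat \<Rightarrow> real \<Rightarrow> real \<Rightarrow> complex fps \<Rightarrow> complex fps \<Rightarrow> complex fps \<Rightarrow> complex fps" where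
  "Btilde_H a2 \<beta> \<gamma> Bt H B =
     Abs_fps (\<lambda>l. \<Sum>j. fps_nth (Btilde_even a2 \<beta> \<gamma> Bt j) l * fps_nth (fps_deriv H oo B) (2*j))"

end

theory Submission
  imports Defs "HOL-Real_Asymp.Real_Asymp" "HOL-Complex_Analysis.Complex_Analysis"
begin

lemma summ_pq: fixes p t :: real assumes "0 < t" shows "summable (\<lambda>k::nat. real k powr p * exp (-t * real k))"
proof -
  have O: "(\<lambda>k::nat. real k powr p * exp (-t * real k)) \<in> O(\<lambda>k. exp (-(t/2) * real k))"
    using assms by real_asymp
  have S: "summable (\<lambda>k::nat. norm (exp (-(t/2) * real k)))" using assms
  proof - 
    have "exp (-(t/2) * real k) = exp(-t/2) ^ k" for k 
      by (subst exp_of_nat_mult[symmetric]) (simp add: algebra_simps) 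
    thus ?thesis using assms by (simp add: summable_geometric del: exp_minus) 
  qed
  show ?thesis by (rule summable_comparison_test_bigo[OF S O])
qed

lemma scale_0 [simp]: "scale a \<beta> \<gamma> 0 = 0"
  by (simp add: scale_def)

lemma scale_pos: "\<beta> > 0 \<Longrightarrow> n \<ge> 1 \<Longrightarrow> scale a \<beta> \<gamma> n > 0"
  by (simp add: scale_def)

lemma scale_nonneg: "\<beta> > 0 \<Longrightarrow> scale a \<beta> \<gamma> n \<ge> 0"
  by (cases "n = 0") (auto simp: scale_def)

lemma two_powr_ge1 [simp]: "1 \<le> (2::real) powr \<bar>g\<bar>"
  by (rule ge_one_powr_ge_zero) auto

lemma powr_gamma_bound:
  fixes x y g :: real
  assumes "0 < x" "x \<le> y" "y \<le> 2 * x"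
  shows "y powr g \<le> 2 powr \<bar>g\<bar> * x powr g"
proof (cases "g \<ge> 0")
  case True
  have "y powr g \<le> (2*x) powr g" using assms True by (intro powr_mono2) auto
  also have "\<dots> = 2 powr \<bar>g\<bar> * x powr g" using True assms by (simp add: powr_mult)
  finally show ?thesis .
next
  case False
  have "y powr g \<le> x powr g" using assms False by (intro powr_mono2') auto
  also have "\<dots> \<le> 2 powr \<bar>g\<bar> * x powr g" by (rule mult_le_cancel_right1[THEN iffD2]) auto
  finally show ?thesis .
qed

lemma powr_gamma_bound':
  fixes x y g :: real
  assumes "0 < x" "x \<le> y" "y \<le> 2 * x"
  shows "x powr g \<le> 2 powr \<bar>g\<bar> * y powr g"
proof (cases "g \<ge> 0")
  case True
  have "x powr g \<le> y powr g" using assms True by (intro powr_mono2) auto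
  also have "\<dots> \<le> 2 powr \<bar>g\<bar> * y powr g" by (rule mult_le_cancel_right1[THEN iffD2]) auto
  finally show ?thesis .
next
  case False
  have "x powr g \<le> (y/2) powr g" using assms False by (intro powr_mono2') auto
  also have "\<dots> = 2 powr \<bar>g\<bar> * y powr g" using False assms by (simp add: powr_divide powr_minus divide_simps)
  finally show ?thesis .
qed

lemma scale_shift:
  assumes \<beta>: "\<beta> > 0" and n: "2 * s \<le> n" "1 \<le> n"
  shows "scale a \<beta> \<gamma> (n - s) \<le> 2 powr \<bar>\<gamma>\<bar> / \<beta> ^ s * scale a \<beta> \<gamma> n * real n powr (-(real a / 2 * real s))"
proof (cases "s = 0")
  case True
  have "scale a \<beta> \<gamma> n \<le> 2 powr \<bar>\<gamma>\<bar> * scale a \<beta> \<gamma> n"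
    using scale_nonneg[OF \<beta>, of a \<gamma> n] by (intro mult_le_cancel_right1[THEN iffD2, of "scale a \<beta> \<gamma> n", simplified mult.commute]) auto
  thus ?thesis using True by simp
next
  case False
  define \<alpha> where "\<alpha> = real a / 2"
  have a0: "\<alpha> \<ge> 0" by (simp add: \<alpha>_def)
  have ns: "real (n - s) = real n - real s" "real n - real s > 0" "real s \<ge> 1" using n False by auto
  have A: "real (n-s) powr (\<alpha> * real (n-s)) \<le> real n powr (\<alpha> * real n) * real n powr (-(\<alpha> * real s))"
  proof -
    have "real (n-s) powr (\<alpha> * real (n-s)) \<le> real n powr (\<alpha> * real (n-s))"
      using ns a0 by (intro powr_mono2) auto
    also have "\<dots> = real n powr (\<alpha> * real n) * real n powr (-(\<alpha> * real s))"
      by (simp add: ns powr_add[symmetric] algebra_simps)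
    finally show ?thesis .
  qed
  have B: "real (n-s) powr \<gamma> \<le> 2 powr \<bar>\<gamma>\<bar> * real n powr \<gamma>"
    using ns n by (intro powr_gamma_bound') auto
  have C: "\<beta> ^ (n - s) = \<beta> ^ n / \<beta> ^ s" using n \<beta> by (simp add: power_diff)
  have "scale a \<beta> \<gamma> (n - s) = real (n-s) powr (\<alpha> * real (n-s)) * real (n-s) powr \<gamma> * (\<beta> ^ n / \<beta> ^ s)"
    by (simp add: scale_def \<alpha>_def C)
  also have "\<dots> \<le> (real n powr (\<alpha> * real n) * real n powr (-(\<alpha> * real s))) * (2 powr \<bar>\<gamma>\<bar> * real n powr \<gamma>) * (\<beta> ^ n / \<beta> ^ s)"
    using A B \<beta> by (intro mult_right_mono mult_mono) auto
  also have "\<dots> = 2 powr \<bar>\<gamma>\<bar> / \<beta> ^ s * scale a \<beta> \<gamma> n * real n powr (-(real a / 2 * real s))"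
    by (simp add: scale_def \<alpha>_def)
  finally show ?thesis .
qed

lemma term_bound_real:
  fixes x y \<sigma> \<alpha> :: real
  assumes "1 \<le> \<sigma>" "\<sigma> \<le> x" "2*x \<le> y" "4*\<sigma> \<le> y" "\<alpha> \<ge> 0"
  shows "x powr (\<alpha>*x) * (y-x) powr (\<alpha>*(y-x)) \<le>
           x powr (\<alpha>*\<sigma>) * exp(-(\<alpha>*ln(3/2))*(x-\<sigma>)) * (y-\<sigma>) powr (\<alpha>*(y-\<sigma>))"
proof -
  have pos: "x > 0" "y - x > 0" "y - \<sigma> > 0" using assms by auto
  have 1: "(y-x) powr (\<alpha>*(y-x)) \<le> (y-\<sigma>) powr (\<alpha>*(y-x))"
    using assms pos by (intro powr_mono2) auto
  have 2: "(y-\<sigma>) powr (\<alpha>*(y-x)) = (y-\<sigma>) powr (\<alpha>*(y-\<sigma>)) * (y-\<sigma>) powr (-(\<alpha>*(x-\<sigma>)))"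
    by (simp add: powr_add[symmetric] algebra_simps)
  have 3: "x powr (\<alpha>*x) = x powr (\<alpha>*\<sigma>) * x powr (\<alpha>*(x-\<sigma>))"
    by (simp add: powr_add[symmetric] algebra_simps)
  have 4: "x powr (\<alpha>*(x-\<sigma>)) * (y-\<sigma>) powr (-(\<alpha>*(x-\<sigma>))) = (x/(y-\<sigma>)) powr (\<alpha>*(x-\<sigma>))"
    using pos by (simp add: powr_minus powr_divide divide_simps)
  have 5: "(x/(y-\<sigma>)) powr (\<alpha>*(x-\<sigma>)) \<le> (2/3) powr (\<alpha>*(x-\<sigma>))"
    using assms pos by (intro powr_mono2) (auto simp: divide_simps)
  have 6: "(2/3::real) powr (\<alpha>*(x-\<sigma>)) = exp(-(\<alpha>*ln(3/2))*(x-\<sigma>))"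
    by (simp add: powr_def ln_div algebra_simps)
  have "x powr (\<alpha>*x) * (y-x) powr (\<alpha>*(y-x)) \<le> x powr (\<alpha>*x) * ((y-\<sigma>) powr (\<alpha>*(y-\<sigma>)) * (y-\<sigma>) powr (-(\<alpha>*(x-\<sigma>))))"
    using 1 2 by (intro mult_left_mono) auto
  also have "\<dots> = x powr (\<alpha>*\<sigma>) * (x powr (\<alpha>*(x-\<sigma>)) * (y-\<sigma>) powr (-(\<alpha>*(x-\<sigma>)))) * (y-\<sigma>) powr (\<alpha>*(y-\<sigma>))"
    by (simp add: 3 algebra_simps)
  also have "\<dots> \<le> x powr (\<alpha>*\<sigma>) * exp(-(\<alpha>*ln(3/2))*(x-\<sigma>)) * (y-\<sigma>) powr (\<alpha>*(y-\<sigma>))"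
    using 4 5 6 by (intro mult_right_mono mult_left_mono) auto
  finally show ?thesis .
qed

lemma gamma_bound_real:
  fixes x y \<sigma> g :: real
  assumes "1 \<le> \<sigma>" "\<sigma> \<le> x" "2*x \<le> y"
  shows "x powr g * (y-x) powr g \<le> 2 powr \<bar>g\<bar> * x powr \<bar>g\<bar> * (y-\<sigma>) powr g"
proof -
  have "x powr g \<le> x powr \<bar>g\<bar>" using assms by (intro powr_mono) auto
  moreover have "(y-x) powr g \<le> 2 powr \<bar>g\<bar> * (y-\<sigma>) powr g"
    using assms by (intro powr_gamma_bound') auto
  ultimately have "x powr g * (y-x) powr g \<le> x powr \<bar>g\<bar> * (2 powr \<bar>g\<bar> * (y-\<sigma>) powr g)"
    by (intro mult_mono) auto
  thus ?thesis by (simp add: algebra_simps)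
qed

lemma scale_term_bound:
  fixes k n s :: nat
  assumes \<beta>: "\<beta> > 0" and s: "1 \<le> s" "s \<le> k" "2 * k \<le> n" "4 * s \<le> n"
  shows "scale a \<beta> \<gamma> k * scale a \<beta> \<gamma> (n-k) \<le>
     (2 powr \<bar>\<gamma>\<bar> * \<beta>^s * exp ((real a/2*ln(3/2)) * real s)) *
     (real k powr (real a/2 * real s + \<bar>\<gamma>\<bar>) * exp (-(real a/2*ln(3/2)) * real k)) * scale a \<beta> \<gamma> (n-s)"
proof -
  define \<alpha> where "\<alpha> = real a / 2"
  define \<tau> where "\<tau> = \<alpha>*ln(3/2)"
  have rk: "real (n-k) = real n - real k" "real (n-s) = real n - real s" using s by auto
  have T: "real k powr (\<alpha>*real k) * (real n-real k) powr (\<alpha>*(real n-real k)) \<le>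
           real k powr (\<alpha>*real s) * exp(-\<tau>*(real k-real s)) * (real n-real s) powr (\<alpha>*(real n-real s))"
    unfolding \<tau>_def using s by (intro term_bound_real) (auto simp: \<alpha>_def)
  have G: "real k powr \<gamma> * (real n - real k) powr \<gamma> \<le> 2 powr \<bar>\<gamma>\<bar> * real k powr \<bar>\<gamma>\<bar> * (real n - real s) powr \<gamma>"
    using s by (intro gamma_bound_real) auto
  have Bt: "\<beta>^k * \<beta>^(n-k) = \<beta>^s * \<beta>^(n-s)"
    using s by (simp add: power_add[symmetric])
  have "scale a \<beta> \<gamma> k * scale a \<beta> \<gamma> (n-k) =
     (real k powr (\<alpha>*real k) * (real n-real k) powr (\<alpha>*(real n-real k))) *
     (real k powr \<gamma> * (real n - real k) powr \<gamma>) * (\<beta>^k * \<beta>^(n-k))"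
    by (simp add: scale_def rk \<alpha>_def algebra_simps)
  also have "\<dots> \<le> (real k powr (\<alpha>*real s) * exp(-\<tau>*(real k-real s)) * (real n-real s) powr (\<alpha>*(real n-real s))) *
     (2 powr \<bar>\<gamma>\<bar> * real k powr \<bar>\<gamma>\<bar> * (real n - real s) powr \<gamma>) * (\<beta>^s * \<beta>^(n-s))"
    unfolding Bt
  proof (rule mult_right_mono[OF mult_mono[OF T G]])
    show "0 \<le> real k powr (\<alpha>*real s) * exp(-\<tau>*(real k-real s)) * (real n-real s) powr (\<alpha>*(real n-real s))"
      by simp
    show "0 \<le> real k powr \<gamma> * (real n - real k) powr \<gamma>" by simp
    show "0 \<le> \<beta>^s * \<beta>^(n-s)" using \<beta> by simp
  qed
  also have "\<dots> = (2 powr \<bar>\<gamma>\<bar> * \<beta>^s * exp (\<tau> * real s)) *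
     ((real k powr (\<alpha>*real s) * real k powr \<bar>\<gamma>\<bar>) * exp (-\<tau> * real k)) * scale a \<beta> \<gamma> (n-s)"
  proof -
    have "exp(-\<tau>*(real k-real s)) = exp (\<tau> * real s) * exp (-\<tau> * real k)"
      by (simp add: exp_add[symmetric] algebra_simps)
    thus ?thesis by (simp add: scale_def rk \<alpha>_def algebra_simps)
  qed
  also have "real k powr (\<alpha>*real s) * real k powr \<bar>\<gamma>\<bar> = real k powr (\<alpha> * real s + \<bar>\<gamma>\<bar>)"
    by (simp add: powr_add)
  finally show ?thesis by (simp add: \<alpha>_def \<tau>_def)
qed

lemma conv_tail:
  fixes s :: nat
  assumes \<beta>: "\<beta> > 0" and s: "1 \<le> s" and a: "a > 0"
  shows "\<exists>D. \<forall>n \<ge> 2 * s. (\<Sum>k=s..n-s. scale a \<beta> \<gamma> k * scale a \<beta> \<gamma> (n-k)) \<le> D * scale a \<beta> \<gamma> (n-s)"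
proof -
  define c where "c = scale a \<beta> \<gamma>"
  define \<tau> where "\<tau> = real a/2 * ln(3/2)"
  define p where "p = real a / 2 * real s + \<bar>\<gamma>\<bar>"
  define E where "E = 2 powr \<bar>\<gamma>\<bar> * \<beta>^s * exp (\<tau> * real s)"
  define X where "X = (\<lambda>k::nat. real k powr p * exp (-\<tau> * real k))"
  have a_pos: "\<tau> > 0" using a by (simp add: \<tau>_def)
  have cnn: "\<And>k. c k \<ge> 0" unfolding c_def using \<beta> by (rule scale_nonneg)
  have Xnn: "\<And>k. X k \<ge> 0" by (simp add: X_def)
  have E0: "E \<ge> 0" using \<beta> by (simp add: E_def)
  have tb: "c k * c (n-k) \<le> E * X k * c (n-s)" if "s \<le> k" "2 * k \<le> n" "4 * s \<le> n" for k n
    using scale_term_bound[OF \<beta> s that, of a \<gamma>] by (simp add: c_def E_def X_def p_def \<tau>_def)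
  have "summable X" unfolding X_def using summ_pq[OF a_pos] by simp
  hence S: "(\<Sum>k<N. X k) \<le> suminf X" for N using Xnn by (intro sum_le_suminf) auto
  define S where "S = suminf X"
  have big: "(\<Sum>k=s..n-s. c k * c (n-k)) \<le> (2 * E * S) * c (n-s)" if n: "4 * s \<le> n" for n
  proof -
    define f where "f = (\<lambda>k. if 2 * k \<le> n then c k * c (n-k) else 0)"
    have fnn: "f k \<ge> 0" for k using cnn by (simp add: f_def)
    have "(\<Sum>k=s..n-s. c k * c (n-k)) \<le> (\<Sum>k=s..n-s. f k + f (n - s + s - k))"
    proof (rule sum_mono)
      fix k assume k: "k \<in> {s..n-s}"
      hence nk: "n - s + s - k = n - k" "n - (n - k) = k" using n by auto
      show "c k * c (n-k) \<le> f k + f (n - s + s - k)"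
      proof (cases "2 * k \<le> n")
        case True thus ?thesis using fnn[of "n-k"] by (simp add: f_def nk)
      next
        case False hence "2 * (n-k) \<le> n" by auto
        thus ?thesis using fnn[of k] by (simp add: f_def nk mult.commute)
      qed
    qed
    also have "\<dots> = 2 * (\<Sum>k=s..n-s. f k)"
      by (simp add: sum.distrib sum.atLeastAtMost_rev[of f s "n-s", symmetric])
    finally have 1: "(\<Sum>k=s..n-s. c k * c (n-k)) \<le> 2 * (\<Sum>k=s..n-s. f k)" .
    have "(\<Sum>k=s..n-s. f k) \<le> (\<Sum>k=s..n-s. E * X k * c (n-s))"
    proof (rule sum_mono)
      fix k assume k: "k \<in> {s..n-s}"
      show "f k \<le> E * X k * c (n-s)"
        using tb[of k n] k n E0 Xnn cnn by (auto simp: f_def)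
    qed
    also have "\<dots> = E * c (n-s) * (\<Sum>k=s..n-s. X k)"
      by (simp add: sum_distrib_left sum_distrib_right algebra_simps)
    also have "(\<Sum>k=s..n-s. X k) \<le> (\<Sum>k<n. X k)"
      using Xnn n s by (intro sum_mono2) auto
    also have "E * c (n-s) * (\<Sum>k<n. X k) \<le> E * c (n-s) * S"
      using S E0 cnn[of "n-s"] by (intro mult_left_mono) (auto simp: S_def)
    finally have 2: "(\<Sum>k=s..n-s. f k) \<le> E * c (n-s) * S" 
      using E0 cnn[of "n-s"] by (simp add: mult_left_mono)
    from 1 2 have "(\<Sum>k=s..n-s. c k * c (n-k)) \<le> 2 * (E * c (n-s) * S)" by linarith
    thus ?thesis by (simp add: algebra_simps)
  qed
  define D2 where "D2 = (\<Sum>n\<in>{2 * s..<4 * s}. (\<Sum>k=s..n-s. c k * c (n-k)) / c (n-s))"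
  have small: "(\<Sum>k=s..n-s. c k * c (n-k)) \<le> D2 * c (n-s)" if n: "2 * s \<le> n" "n < 4 * s" for n
  proof -
    have cp: "c (n-s) > 0" unfolding c_def using \<beta> n s by (intro scale_pos) auto
    have "(\<Sum>k=s..n-s. c k * c (n-k)) / c (n-s) \<le> D2"
      unfolding D2_def using n cnn
      by (intro member_le_sum[where f = "\<lambda>n. (\<Sum>k=s..n-s. c k * c (n-k)) / c (n-s)"])
         (auto intro!: divide_nonneg_nonneg sum_nonneg mult_nonneg_nonneg)
    thus ?thesis using cp by (simp add: divide_simps)
  qed
  show ?thesis
  proof (intro exI[of _ "max (2 * E*S) D2"] allI impI)
    fix n assume n: "2 * s \<le> n"
    show "(\<Sum>k=s..n-s. scale a \<beta> \<gamma> k * scale a \<beta> \<gamma> (n-k)) \<le> max (2 * E*S) D2 * scale a \<beta> \<gamma> (n-s)"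
    proof (cases "n < 4 * s")
      case True
      have "D2 * c (n-s) \<le> max (2 * E*S) D2 * c (n-s)" using cnn by (intro mult_right_mono) auto
      thus ?thesis using small[OF n True] by (simp add: c_def)
    next
      case False
      have "(2 * E*S) * c (n-s) \<le> max (2 * E*S) D2 * c (n-s)" using cnn by (intro mult_right_mono) auto
      thus ?thesis using big[of n] False by (simp add: c_def)
    qed
  qed
qed


lemma conv_one:
  assumes \<beta>: "\<beta> > 0" and a: "a > 0"
  shows "\<exists>D\<ge>0. \<forall>n. (\<Sum>k=1..n-1. scale a \<beta> \<gamma> k * scale a \<beta> \<gamma> (n-k)) \<le> D * scale a \<beta> \<gamma> n * real n powr (-(real a / 2))"
proof -
  obtain D where D: "\<forall>n \<ge> 2. (\<Sum>k=1..n-1. scale a \<beta> \<gamma> k * scale a \<beta> \<gamma> (n-k)) \<le> D * scale a \<beta> \<gamma> (n-1)"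
    using conv_tail[OF \<beta> _ a, of 1 \<gamma>] by auto
  define K where "K = 2 powr \<bar>\<gamma>\<bar> / \<beta>"
  have K0: "K \<ge> 0" using \<beta> by (simp add: K_def)
  show ?thesis
  proof (intro exI[of _ "max D 0 * K"] conjI allI)
    show "max D 0 * K \<ge> 0" using K0 by simp
    fix n :: nat
    show "(\<Sum>k=1..n-1. scale a \<beta> \<gamma> k * scale a \<beta> \<gamma> (n-k)) \<le> max D 0 * K * scale a \<beta> \<gamma> n * real n powr (-(real a / 2))"
    proof (cases "n \<ge> 2")
      case False
      hence "{1..n-1} = {}" by auto
      thus ?thesis using K0 scale_nonneg[OF \<beta>, of a \<gamma> n] by simp
    next
      case True
      have "(\<Sum>k=1..n-1. scale a \<beta> \<gamma> k * scale a \<beta> \<gamma> (n-k)) \<le> D * scale a \<beta> \<gamma> (n-1)"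
        using D True by auto
      also have "\<dots> \<le> max D 0 * scale a \<beta> \<gamma> (n-1)"
        using scale_nonneg[OF \<beta>, of a \<gamma> "n-1"] by (intro mult_right_mono) auto
      finally have A: "(\<Sum>k=1..n-1. scale a \<beta> \<gamma> k * scale a \<beta> \<gamma> (n-k)) \<le> max D 0 * scale a \<beta> \<gamma> (n-1)" .
      have B: "scale a \<beta> \<gamma> (n-1) \<le> K * scale a \<beta> \<gamma> n * real n powr (-(real a / 2 * real (1::nat)))"
        unfolding K_def using scale_shift[OF \<beta>, of 1 n a \<gamma>] True by simp
      have "max D 0 * scale a \<beta> \<gamma> (n-1) \<le> max D 0 * (K * scale a \<beta> \<gamma> n * real n powr (-(real a / 2 * real (1::nat))))"
        using B by (intro mult_left_mono) auto
      with A show ?thesis by (simp add: algebra_simps)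
    qed
  qed
qed

lemma conv_full:
  assumes \<beta>: "\<beta> > 0" and a: "a > 0"
  shows "\<exists>D\<ge>0. \<forall>n. (\<Sum>k=1..n-1. scale a \<beta> \<gamma> k * scale a \<beta> \<gamma> (n-k)) \<le> D * scale a \<beta> \<gamma> n"
proof -
  obtain D where D: "D \<ge> 0" "\<And>n. (\<Sum>k=1..n-1. scale a \<beta> \<gamma> k * scale a \<beta> \<gamma> (n-k)) \<le> D * scale a \<beta> \<gamma> n * real n powr (-(real a / 2))"
    using conv_one[OF \<beta> a, of \<gamma>] by auto
  show ?thesis
  proof (intro exI[of _ D] conjI allI)
    show "D \<ge> 0" by (rule D(1))
    fix n :: nat
    show "(\<Sum>k=1..n-1. scale a \<beta> \<gamma> k * scale a \<beta> \<gamma> (n-k)) \<le> D * scale a \<beta> \<gamma> n"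
    proof (cases "n = 0")
      case True thus ?thesis using D by simp
    next
      case False
      have "1 \<le> real n powr (real a / 2)" using False by (intro ge_one_powr_ge_zero) auto
      hence "real n powr (-(real a / 2)) \<le> 1" by (simp add: powr_minus_divide divide_le_eq)
      hence "D * scale a \<beta> \<gamma> n * real n powr (-(real a / 2)) \<le> D * scale a \<beta> \<gamma> n"
        using D scale_nonneg[OF \<beta>, of a \<gamma> n] by (intro mult_left_le) auto
      thus ?thesis using D(2)[of n] by linarith
    qed
  qed
qed

lemma conv_small:
  assumes \<beta>: "\<beta> > 0" and a: "a > 0" and e: "\<epsilon> > 0"
  shows "\<exists>N. \<forall>n\<ge>N. (\<Sum>k=1..n-1. scale a \<beta> \<gamma> k * scale a \<beta> \<gamma> (n-k)) \<le> \<epsilon> * scale a \<beta> \<gamma> n"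
proof -
  obtain D where D: "D \<ge> 0" "\<And>n. (\<Sum>k=1..n-1. scale a \<beta> \<gamma> k * scale a \<beta> \<gamma> (n-k)) \<le> D * scale a \<beta> \<gamma> n * real n powr (-(real a / 2))"
    using conv_one[OF \<beta> a, of \<gamma>] by auto
  have "((\<lambda>n::nat. real n powr (-(real a / 2))) \<longlongrightarrow> 0) sequentially"
    using a by (intro tendsto_neg_powr filterlim_real_sequentially) auto
  hence "eventually (\<lambda>n. real n powr (-(real a / 2)) < \<epsilon> / (D + 1)) sequentially"
    using e D by (intro order_tendstoD(2)) auto
  then obtain N where N: "\<And>n. n \<ge> N \<Longrightarrow> real n powr (-(real a / 2)) < \<epsilon> / (D + 1)"
    unfolding eventually_sequentially by auto
  show ?thesis
  proof (intro exI[of _ N] allI impI)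
    fix n assume n: "n \<ge> N"
    have "D * real n powr (-(real a / 2)) \<le> \<epsilon>"
    proof -
      have "D * real n powr (-(real a / 2)) \<le> (D + 1) * (\<epsilon> / (D + 1))"
        using N[OF n] D by (intro mult_mono) auto
      thus ?thesis using D by simp
    qed
    hence "(D * real n powr (-(real a / 2))) * scale a \<beta> \<gamma> n \<le> \<epsilon> * scale a \<beta> \<gamma> n"
      using scale_nonneg[OF \<beta>, of a \<gamma> n] by (rule mult_right_mono)
    hence "D * scale a \<beta> \<gamma> n * real n powr (-(real a / 2)) \<le> \<epsilon> * scale a \<beta> \<gamma> n"
      by (simp add: algebra_simps)
    thus "(\<Sum>k=1..n-1. scale a \<beta> \<gamma> k * scale a \<beta> \<gamma> (n-k)) \<le> \<epsilon> * scale a \<beta> \<gamma> n"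
      using D(2)[of n] by linarith
  qed
qed

definition maj :: "'a::real_normed_field fps \<Rightarrow> real fps \<Rightarrow> bool" where
  "maj F G \<longleftrightarrow> (\<forall>i. norm (fps_nth F i) \<le> fps_nth G i)"

lemma majD: "maj F G \<Longrightarrow> norm (fps_nth F i) \<le> fps_nth G i"
  by (simp add: maj_def)

lemma maj_nonneg: "maj F G \<Longrightarrow> 0 \<le> fps_nth G i"
  using majD[of F G i] norm_ge_zero[of "fps_nth F i"] by linarith

lemma maj_mult:
  fixes F F' :: "'a::real_normed_field fps"
  assumes "maj F G" "maj F' G'"
  shows "maj (F * F') (G * G')"
  unfolding maj_def
proof
  fix n
  have "norm (fps_nth (F * F') n) = norm (\<Sum>i=0..n. fps_nth F i * fps_nth F' (n - i))" by (simp add: fps_mult_nth)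
  also have "\<dots> \<le> (\<Sum>i=0..n. norm (fps_nth F i * fps_nth F' (n - i)))" by (rule norm_sum)
  also have "\<dots> \<le> (\<Sum>i=0..n. fps_nth G i * fps_nth G' (n - i))"
  proof (rule sum_mono)
    fix i
    show "norm (fps_nth F i * fps_nth F' (n - i)) \<le> fps_nth G i * fps_nth G' (n - i)"
      unfolding norm_mult using assms
      by (intro mult_mono majD maj_nonneg) (auto intro: maj_nonneg)
  qed
  also have "\<dots> = fps_nth (G * G') n" by (simp add: fps_mult_nth)
  finally show "norm (fps_nth (F * F') n) \<le> fps_nth (G * G') n" .
qed

lemma maj_one: "maj (1 :: 'a::real_normed_field fps) 1"
  by (simp add: maj_def)

lemma maj_zero: "maj (0 :: 'a::real_normed_field fps) 0"
  by (simp add: maj_def)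

lemma maj_power:
  fixes F :: "'a::real_normed_field fps"
  assumes "maj F G" shows "maj (F ^ m) (G ^ m)"
  by (induction m) (auto intro: maj_mult maj_one assms)

lemma maj_add:
  fixes F F' :: "'a::real_normed_field fps"
  assumes "maj F G" "maj F' G'" shows "maj (F + F') (G + G')"
  unfolding maj_def using assms by (auto intro: order.trans[OF norm_triangle_ineq] add_mono majD)

lemma maj_sum:
  fixes F :: "'b \<Rightarrow> 'a::real_normed_field fps"
  assumes "\<And>i. i \<in> I \<Longrightarrow> maj (F i) (G i)"
  shows "maj (\<Sum>i\<in>I. F i) (\<Sum>i\<in>I. G i)"
  using assms
proof (induction I rule: infinite_finite_induct)
  case (infinite A) thus ?case by (simp add: maj_zero)
next
  case empty thus ?case by (simp add: maj_zero)
next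
  case (insert x F) thus ?case by (simp add: maj_add)
qed

lemma maj_mono:
  assumes "maj F G" "\<And>i. fps_nth G i \<le> fps_nth G' i" shows "maj F G'"
  using assms unfolding maj_def by (meson order.trans)

lemma maj_cmult:
  fixes F :: "'a::real_normed_field fps"
  assumes "maj F G" shows "maj (fps_const c * F) (fps_const (norm c) * G)"
  using assms unfolding maj_def by (auto simp: norm_mult intro: mult_left_mono)

lemma maj_self: "(\<And>i. fps_nth F i \<ge> 0) \<Longrightarrow> maj (F :: real fps) F"
  by (simp add: maj_def)

lemma geo_nth0:
  fixes F :: "'a::comm_ring_1 fps"
  assumes "fps_nth F 0 = 0" shows "fps_nth (\<Sum>i\<le>N. F ^ i) 0 = 1"
proof -
  have "fps_nth (\<Sum>i\<le>N. F ^ i) 0 = (\<Sum>i\<le>N. (fps_nth F 0) ^ i)" by (simp add: fps_sum_nth fps_power_zeroth)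
  also have "\<dots> = (\<Sum>i\<le>N. if i = 0 then 1 else 0)" using assms by (intro sum.cong) (auto simp: zero_power)
  also have "\<dots> = 1" by simp
  finally show ?thesis .
qed

lemma power_nth_vanish:
  fixes F :: "'a::comm_ring_1 fps"
  assumes "fps_nth F 0 = 0" "n < i" shows "fps_nth (F ^ i) n = 0"
  using startsby_zero_power_prefix[OF assms(1)] assms(2) by blast

lemma geo_le_U:
  fixes F :: "real fps"
  assumes "fps_nth F 0 = 0" "\<And>k. fps_nth F k \<ge> 0"
  shows "fps_nth (\<Sum>i\<le>N. F ^ i) n \<le> (\<Sum>i\<le>n. fps_nth (F ^ i) n)"
proof -
  have nn: "fps_nth (F ^ i) n \<ge> 0" for i using maj_nonneg[OF maj_power[OF maj_self[OF assms(2)]]] by blast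
  have "fps_nth (\<Sum>i\<le>N. F ^ i) n = (\<Sum>i\<le>N. fps_nth (F ^ i) n)" by (simp add: fps_sum_nth)
  also have "\<dots> \<le> (\<Sum>i\<le>max N n. fps_nth (F ^ i) n)" using nn by (intro sum_mono2) auto
  also have "\<dots> = (\<Sum>i\<le>n. fps_nth (F ^ i) n)"
    using power_nth_vanish[OF assms(1)] by (intro sum.mono_neutral_right) auto
  finally show ?thesis .
qed

lemma core:
  fixes F :: "real fps"
  assumes \<beta>: "\<beta> > 0" and a: "a > 0" and F0: "fps_nth F 0 = 0"
    and Fnn: "\<And>k. fps_nth F k \<ge> 0" and FC: "\<And>k. fps_nth F k \<le> C * scale a \<beta> \<gamma> k"
  shows "\<exists>D. \<forall>N n. n \<ge> 1 \<longrightarrow> fps_nth (\<Sum>i\<le>N. F ^ i) n \<le> D * scale a \<beta> \<gamma> n"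
proof -
  define c where "c = scale a \<beta> \<gamma>"
  have cnn: "c k \<ge> 0" for k unfolding c_def using \<beta> by (rule scale_nonneg)
  have cpos: "c k > 0" if "k \<ge> 1" for k unfolding c_def using \<beta> that by (rule scale_pos)
  define C' where "C' = max C 1"
  have C'pos: "C' > 0" by (simp add: C'_def)
  have FC': "fps_nth F k \<le> C' * c k" for k
    using FC[of k] cnn[of k] by (simp add: C'_def c_def) (meson max.cobounded1 mult_right_mono order.trans)
  obtain N0 where N0: "\<And>n. n \<ge> N0 \<Longrightarrow> (\<Sum>k=1..n-1. c k * c (n-k)) \<le> (1 / (2 * C')) * c n"
    using conv_small[OF \<beta> a, of "1 / (2 * C')" \<gamma>] C'pos unfolding c_def by auto
  define U where "U = (\<lambda>n. \<Sum>i\<le>n. fps_nth (F ^ i) n)"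
  define D0 where "D0 = (\<Sum>n\<in>{1..<N0}. U n / c n)"
  define D where "D = max (2 * C') D0"
  have Pnn: "fps_nth (F ^ i) n \<ge> 0" for i n using maj_nonneg[OF maj_power[OF maj_self[OF Fnn]]] by blast
  have Snn: "fps_nth (\<Sum>i\<le>N. F ^ i) n \<ge> 0" for N n by (simp add: fps_sum_nth sum_nonneg Pnn)
  have small: "U n \<le> D * c n" if "1 \<le> n" "n < N0" for n
  proof -
    have "U n / c n \<le> D0" unfolding D0_def using that cnn Pnn
      by (intro member_le_sum[where f = "\<lambda>n. U n / c n"]) (auto simp: U_def intro!: divide_nonneg_nonneg sum_nonneg)
    hence "U n \<le> D0 * c n" using cpos[OF that(1)] by (simp add: divide_simps)
    also have "\<dots> \<le> D * c n" using cnn by (intro mult_right_mono) (auto simp: D_def)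
    finally show ?thesis .
  qed
  have D2: "D \<ge> 2 * C'" by (simp add: D_def)
  have main: "\<forall>n. n \<ge> 1 \<longrightarrow> fps_nth (\<Sum>i\<le>N. F ^ i) n \<le> D * c n" for N
  proof (induction N)
    case 0
    show ?case using D2 C'pos cnn by (auto intro: mult_nonneg_nonneg)
  next
    case (Suc N)
    have rec: "(\<Sum>i\<le>Suc N. F ^ i) = 1 + F * (\<Sum>i\<le>N. F ^ i)"
      by (subst sum.atMost_Suc_shift) (simp add: sum_distrib_left del: sum.atMost_Suc)
    show ?case
    proof (intro allI impI)
      fix n :: nat assume n: "n \<ge> 1"
      show "fps_nth (\<Sum>i\<le>Suc N. F ^ i) n \<le> D * c n"
      proof (cases "n < N0")
        case True
        have "fps_nth (\<Sum>i\<le>Suc N. F ^ i) n \<le> U n" unfolding U_def using F0 Fnn by (rule geo_le_U)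
        also have "\<dots> \<le> D * c n" using small n True by auto
        finally show ?thesis .
      next
        case False
        define S where "S = (\<Sum>i\<le>N. F ^ i)"
        obtain m where m: "n = Suc m" using n by (cases n) auto
        have "fps_nth (\<Sum>i\<le>Suc N. F ^ i) n = fps_nth (F * S) n" using n by (subst rec) (simp add: S_def del: sum.atMost_Suc)
        also have "\<dots> = (\<Sum>k=0..n. fps_nth F k * fps_nth S (n - k))" by (simp add: fps_mult_nth)
        also have "\<dots> = fps_nth F 0 * fps_nth S n + (\<Sum>k=1..n. fps_nth F k * fps_nth S (n - k))"
          by (simp add: sum.atLeast_Suc_atMost)
        also have "(\<Sum>k=1..n. fps_nth F k * fps_nth S (n - k)) = (\<Sum>k=1..n-1. fps_nth F k * fps_nth S (n - k)) + fps_nth F n * fps_nth S 0"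
          by (simp add: m)
        also have "fps_nth S 0 = 1" unfolding S_def using F0 by (rule geo_nth0)
        also have "(\<Sum>k=1..n-1. fps_nth F k * fps_nth S (n - k)) \<le> (\<Sum>k=1..n-1. (C' * c k) * (D * c (n-k)))"
        proof (rule sum_mono)
          fix k assume k: "k \<in> {1..n-1}"
          have "fps_nth S (n - k) \<le> D * c (n - k)" using Suc.IH k unfolding S_def by auto
          thus "fps_nth F k * fps_nth S (n - k) \<le> (C' * c k) * (D * c (n-k))"
            using FC'[of k] Fnn[of k] Snn[of N "n-k"] C'pos cnn[of k] unfolding S_def
            by (intro mult_mono) auto
        qed
        also have "\<dots> = C' * D * (\<Sum>k=1..n-1. c k * c (n-k))"
          by (simp add: sum_distrib_left algebra_simps)
        finally have A: "fps_nth (\<Sum>i\<le>Suc N. F ^ i) n \<le> C' * D * (\<Sum>k=1..n-1. c k * c (n-k)) + fps_nth F n"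
          using F0 by simp
        have "C' * D * (\<Sum>k=1..n-1. c k * c (n-k)) \<le> C' * D * ((1 / (2 * C')) * c n)"
          using N0[of n] False C'pos D2 by (intro mult_left_mono) auto
        also have "\<dots> = D * c n / 2" using C'pos by (simp add: field_simps)
        finally have B: "C' * D * (\<Sum>k=1..n-1. c k * c (n-k)) \<le> D * c n / 2" .
        have "fps_nth F n \<le> C' * c n" by (rule FC')
        also have "\<dots> \<le> D / 2 * c n" using D2 cnn[of n] by (intro mult_right_mono) auto
        finally have C: "fps_nth F n \<le> D / 2 * c n" .
        show ?thesis using A B C by (simp add: field_simps)
      qed
    qed
  qed
  thus ?thesis unfolding c_def by blast
qed

lemma prod_bound:
  fixes F G :: "real fps" and c :: "nat \<Rightarrow> real"
  assumes Fnn: "\<And>k. fps_nth F k \<ge> 0" and Gnn: "\<And>k. fps_nth G k \<ge> 0"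
    and F0: "fps_nth F 0 \<le> A" and G0: "fps_nth G 0 \<le> A'"
    and Fk: "\<And>k. k \<ge> 1 \<Longrightarrow> fps_nth F k \<le> A * c k"
    and Gk: "\<And>k. k \<ge> 1 \<Longrightarrow> fps_nth G k \<le> A' * c k"
    and cnn: "\<And>k. c k \<ge> 0"
    and D1: "\<And>n. (\<Sum>k=1..n-1. c k * c (n-k)) \<le> D1 * c n"
    and n: "n \<ge> 1"
  shows "fps_nth (F * G) n \<le> A * A' * (2 + D1) * c n"
proof -
  obtain m where m: "n = Suc m" using n by (cases n) auto
  have A0: "A \<ge> 0" using F0 Fnn[of 0] by linarith
  have A'0: "A' \<ge> 0" using G0 Gnn[of 0] by linarith
  have "fps_nth (F * G) n = (\<Sum>k=0..n. fps_nth F k * fps_nth G (n - k))" by (simp add: fps_mult_nth)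
  also have "\<dots> = fps_nth F 0 * fps_nth G n + (\<Sum>k=1..n. fps_nth F k * fps_nth G (n - k))"
    by (simp add: sum.atLeast_Suc_atMost)
  also have "(\<Sum>k=1..n. fps_nth F k * fps_nth G (n - k)) = (\<Sum>k=1..n-1. fps_nth F k * fps_nth G (n - k)) + fps_nth F n * fps_nth G 0"
    by (simp add: m)
  also have "(\<Sum>k=1..n-1. fps_nth F k * fps_nth G (n - k)) \<le> (\<Sum>k=1..n-1. (A * c k) * (A' * c (n - k)))"
    by (intro sum_mono mult_mono Fk Gk) (use Fnn Gnn A0 cnn in auto)
  also have "\<dots> = A * A' * (\<Sum>k=1..n-1. c k * c (n - k))" by (simp add: sum_distrib_left algebra_simps)
  also have "\<dots> \<le> A * A' * (D1 * c n)" using D1[of n] A0 A'0 by (intro mult_left_mono) auto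
  finally have 1: "fps_nth (F * G) n \<le> fps_nth F 0 * fps_nth G n + A * A' * (D1 * c n) + fps_nth F n * fps_nth G 0"
    by simp
  have 2: "fps_nth F 0 * fps_nth G n \<le> A * (A' * c n)"
    using F0 Gk[OF n] Fnn Gnn A0 by (intro mult_mono) auto
  have 3: "fps_nth F n * fps_nth G 0 \<le> (A * c n) * A'"
    using G0 Fk[OF n] Fnn Gnn A0 cnn by (intro mult_mono) auto
  from 1 2 3 show ?thesis by (simp add: algebra_simps)
qed

lemma tail_bound:
  fixes Q Z :: "real fps" and c :: "nat \<Rightarrow> real"
  assumes Qnn: "\<And>k. fps_nth Q k \<ge> 0" and Znn: "\<And>k. fps_nth Z k \<ge> 0"
    and Qs: "\<And>k. k < s \<Longrightarrow> fps_nth Q k = 0" and Zs: "\<And>k. k < s \<Longrightarrow> fps_nth Z k = 0"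
    and Qk: "\<And>k. fps_nth Q k \<le> K * c k" and Zk: "\<And>k. k \<ge> 1 \<Longrightarrow> fps_nth Z k \<le> K' * c k"
    and cnn: "\<And>k. c k \<ge> 0" and s: "s \<ge> 1" and K0: "K \<ge> 0" and K'0: "K' \<ge> 0"
    and Ds: "(\<Sum>k=s..n-s. c k * c (n-k)) \<le> Ds * c (n - s)"
    and n: "n \<ge> 2 * s"
  shows "fps_nth (Q * Z) n \<le> K * K' * Ds * c (n - s)"
proof -
  have "fps_nth (Q * Z) n = (\<Sum>k=0..n. fps_nth Q k * fps_nth Z (n - k))" by (simp add: fps_mult_nth)
  also have "\<dots> = (\<Sum>k=s..n-s. fps_nth Q k * fps_nth Z (n - k))"
  proof (rule sum.mono_neutral_right)
    show "\<forall>i\<in>{0..n} - {s..n-s}. fps_nth Q i * fps_nth Z (n - i) = 0"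
      using Qs Zs n by auto
  qed (use n in auto)
  also have "\<dots> \<le> (\<Sum>k=s..n-s. (K * c k) * (K' * c (n - k)))"
    by (intro sum_mono mult_mono Qk Zk) (use Qnn Znn K0 cnn n s in auto)
  also have "\<dots> = K * K' * (\<Sum>k=s..n-s. c k * c (n - k))" by (simp add: sum_distrib_left algebra_simps)
  also have "\<dots> \<le> K * K' * (Ds * c (n - s))" using Ds K0 K'0 by (intro mult_left_mono) auto
  finally show ?thesis by (simp add: algebra_simps)
qed

lemma low_vanish_mult:
  fixes Q Y :: "'a::comm_ring_1 fps"
  assumes "\<And>k. k < s \<Longrightarrow> fps_nth Q k = 0" "t < s"
  shows "fps_nth (Q * Y) t = 0"
  using assms by (auto simp: fps_mult_nth intro!: sum.neutral)

lemma coef_geom_bound: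
  fixes G :: "complex fps"
  assumes "fps_conv_radius G > 0"
  shows "\<exists>M lam. M \<ge> 0 \<and> lam \<ge> 0 \<and> (\<forall>m. norm (fps_nth G m) \<le> M * lam ^ m)"
proof -
  obtain \<rho> where \<rho>: "0 < ereal \<rho>" "ereal \<rho> < fps_conv_radius G"
    using ereal_dense2[OF assms] by blast
  have \<rho>0: "\<rho> > 0" using \<rho>(1) by simp
  have "summable (\<lambda>m. norm (fps_nth G m * complex_of_real \<rho> ^ m))"
    using \<rho> \<rho>0 by (intro norm_summable_fps) simp
  hence "(\<lambda>m. norm (fps_nth G m * complex_of_real \<rho> ^ m)) \<longlonglongrightarrow> 0"
    by (rule summable_LIMSEQ_zero)
  hence "Bseq (\<lambda>m. norm (fps_nth G m * complex_of_real \<rho> ^ m))"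
    by (intro convergent_imp_Bseq convergentI)
  then obtain M where M: "M > 0" "\<And>m. norm (norm (fps_nth G m * complex_of_real \<rho> ^ m)) \<le> M"
    by (auto elim!: BseqE)
  have "norm (fps_nth G m) \<le> M * (1/\<rho>) ^ m" for m
  proof -
    have "norm (fps_nth G m) * \<rho> ^ m \<le> M" using M(2)[of m] \<rho>0 by (simp add: norm_mult norm_power)
    thus ?thesis using \<rho>0 by (simp add: field_simps power_divide)
  qed
  moreover have "M \<ge> 0" "1/\<rho> \<ge> 0" using M \<rho>0 by auto
  ultimately show ?thesis by blast
qed

lemma compose_bound:
  fixes G F :: "complex fps"
  assumes \<beta>: "\<beta> > 0" and a: "a > 0" and M: "M \<ge> 0" and lam: "lam \<ge> 0"
    and G: "\<And>m. norm (fps_nth G m) \<le> M * lam ^ m"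
    and F0: "fps_nth F 0 = 0" and K: "K \<ge> 0" and F: "\<And>k. norm (fps_nth F k) \<le> K * scale a \<beta> \<gamma> k"
  shows "\<exists>D. \<forall>k \<ge> 1. norm (fps_nth (G oo F) k) \<le> D * scale a \<beta> \<gamma> k"
proof -
  define c where "c = scale a \<beta> \<gamma>"
  have cnn: "c k \<ge> 0" for k unfolding c_def using \<beta> by (rule scale_nonneg)
  define Ch where "Ch = Abs_fps (\<lambda>k. K * c k)"
  have majF: "maj F Ch" using F by (simp add: maj_def Ch_def c_def)
  define Phi where "Phi = fps_const lam * Ch"
  have Phi_nth: "fps_nth Phi k = lam * K * c k" for k by (simp add: Phi_def Ch_def)
  obtain D where D: "\<And>N n. n \<ge> 1 \<Longrightarrow> fps_nth (\<Sum>i\<le>N. Phi ^ i) n \<le> D * c n"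
    using core[OF \<beta> a, of Phi "lam * K" \<gamma>] unfolding c_def[symmetric]
    by (auto simp: Phi_nth c_def intro: mult_nonneg_nonneg lam K cnn[unfolded c_def])
  show ?thesis
  proof (intro exI[of _ "M * D"] allI impI)
    fix k :: nat assume k: "k \<ge> 1"
    have "norm (fps_nth (G oo F) k) = norm (\<Sum>m=0..k. fps_nth G m * fps_nth (F ^ m) k)"
      by (simp add: fps_compose_nth)
    also have "\<dots> \<le> (\<Sum>m=0..k. norm (fps_nth G m) * norm (fps_nth (F ^ m) k))"
      by (rule order.trans[OF norm_sum]) (simp add: norm_mult)
    also have "\<dots> \<le> (\<Sum>m=0..k. (M * lam ^ m) * fps_nth (Ch ^ m) k)"
      by (intro sum_mono mult_mono G majD[OF maj_power[OF majF]]) (use M lam in auto)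
    also have "\<dots> = M * (\<Sum>m=0..k. fps_nth (Phi ^ m) k)"
      by (simp add: Phi_def power_mult_distrib fps_const_power sum_distrib_left algebra_simps)
    also have "(\<Sum>m=0..k. fps_nth (Phi ^ m) k) = fps_nth (\<Sum>m\<le>k. Phi ^ m) k"
      by (simp add: fps_sum_nth atLeast0AtMost)
    also have "M * \<dots> \<le> M * (D * c k)" using D[OF k] M by (intro mult_left_mono) auto
    finally show "norm (fps_nth (G oo F) k) \<le> M * D * scale a \<beta> \<gamma> k" by (simp add: c_def)
  qed
qed

primrec Wp :: "'a::comm_ring_1 \<Rightarrow> 'a \<Rightarrow> nat \<Rightarrow> 'a" where
  "Wp P B 0 = 0"
| "Wp P B (Suc m) = B * Wp P B m + of_nat m * P ^ (m - 1)"

lemma pow_decomp: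
  fixes P Q :: "'a::comm_ring_1"
  shows "(P + Q) ^ m = P ^ m + of_nat m * P ^ (m - 1) * Q + Q ^ 2 * Wp P (P + Q) m"
proof (induction m)
  case 0 thus ?case by simp
next
  case (Suc m)
  have PP: "of_nat m * (P * P ^ (m - 1)) = of_nat m * P ^ m"
    by (cases m) auto
  have "(P + Q) ^ Suc m = (P + Q) * (P ^ m + of_nat m * P ^ (m - 1) * Q + Q ^ 2 * Wp P (P + Q) m)"
    using Suc by simp
  also have "\<dots> = P ^ Suc m + of_nat (Suc m) * P ^ m * Q + Q ^ 2 * ((P + Q) * Wp P (P + Q) m + of_nat m * P ^ (m - 1))"
    using PP by (simp add: algebra_simps power2_eq_square)
  finally show ?case by simp
qed

lemma power_trunc:
  fixes F G :: "'a::comm_ring_1 fps"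
  assumes "\<And>i. i \<le> R \<Longrightarrow> fps_nth F i = fps_nth G i" "k \<le> R"
  shows "fps_nth (F ^ m) k = fps_nth (G ^ m) k"
  using assms(2)
proof (induction m arbitrary: k)
  case 0 thus ?case by simp
next
  case (Suc m)
  show ?case using Suc assms(1) by (auto simp: fps_mult_nth intro!: sum.cong)
qed

lemma compose_trunc:
  fixes F G H :: "'a::comm_ring_1 fps"
  assumes "\<And>i. i \<le> R \<Longrightarrow> fps_nth F i = fps_nth G i" "k \<le> R"
  shows "fps_nth (H oo F) k = fps_nth (H oo G) k"
  using power_trunc[OF assms] by (simp add: fps_compose_nth)

lemma nth_of_nat_mult: "fps_nth (of_nat m * X) n = of_nat m * fps_nth X n"
  by (simp add: fps_of_nat[symmetric])

lemma decomp_identity: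
  fixes H B :: "complex fps" and R n :: nat
  defines "P \<equiv> Abs_fps (\<lambda>i. if i \<le> R then fps_nth B i else 0)"
  defines "Q \<equiv> B - P"
  assumes B0: "fps_nth B 0 = 0" and n: "2 * R < n"
  shows "fps_nth (H oo B) n = fps_nth (H oo P) n
          + (\<Sum>k\<le>R. fps_nth (fps_deriv H oo B) k * fps_nth B (n - k))
          + (\<Sum>k=R+1..n. fps_nth (fps_deriv H oo P) k * fps_nth Q (n - k))
          + (\<Sum>m=0..n. fps_nth H m * fps_nth (Q ^ 2 * Wp P B m) n)"
proof -
  have BPQ: "B = P + Q" by (simp add: Q_def)
  have P0: "fps_nth P 0 = 0" using B0 by (simp add: P_def)
  have Qnth: "fps_nth Q i = (if i \<le> R then 0 else fps_nth B i)" for i by (simp add: Q_def P_def)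
  have "fps_nth (H oo B) n = (\<Sum>m=0..n. fps_nth H m * fps_nth (B ^ m) n)" by (simp add: fps_compose_nth)
  also have "\<dots> = (\<Sum>m=0..n. fps_nth H m * fps_nth (P ^ m) n)
               + (\<Sum>m=0..n. fps_nth H m * fps_nth (of_nat m * P ^ (m - 1) * Q) n)
               + (\<Sum>m=0..n. fps_nth H m * fps_nth (Q ^ 2 * Wp P B m) n)"
  proof -
    have "fps_nth (B ^ m) n = fps_nth (P ^ m) n + fps_nth (of_nat m * P ^ (m - 1) * Q) n + fps_nth (Q ^ 2 * Wp P B m) n" for m
      using pow_decomp[of P Q m] unfolding BPQ[symmetric] by simp
    thus ?thesis by (simp add: sum.distrib algebra_simps)
  qed
  also have "(\<Sum>m=0..n. fps_nth H m * fps_nth (P ^ m) n) = fps_nth (H oo P) n" by (simp add: fps_compose_nth)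
  also have "(\<Sum>m=0..n. fps_nth H m * fps_nth (of_nat m * P ^ (m - 1) * Q) n)
             = (\<Sum>k=0..n. fps_nth (fps_deriv H oo P) k * fps_nth Q (n - k))"
  proof -
    have "(\<Sum>m=0..n. fps_nth H m * fps_nth (of_nat m * P ^ (m - 1) * Q) n)
          = (\<Sum>m=0..n. \<Sum>k=0..n. of_nat m * fps_nth H m * fps_nth (P ^ (m - 1)) k * fps_nth Q (n - k))"
    proof -
      have e: "fps_nth (of_nat m * P ^ (m - 1) * Q) n = of_nat m * (\<Sum>k=0..n. fps_nth (P ^ (m - 1)) k * fps_nth Q (n - k))" for m
        by (subst mult.assoc, subst nth_of_nat_mult, subst fps_mult_nth, rule refl)
      show ?thesis unfolding e by (simp add: sum_distrib_left algebra_simps)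
    qed
    also have "\<dots> = (\<Sum>k=0..n. \<Sum>m=0..n. of_nat m * fps_nth H m * fps_nth (P ^ (m - 1)) k * fps_nth Q (n - k))"
      by (rule sum.swap)
    also have "\<dots> = (\<Sum>k=0..n. fps_nth (fps_deriv H oo P) k * fps_nth Q (n - k))"
    proof (rule sum.cong[OF refl])
      fix k assume k: "k \<in> {0..n}"
      show "(\<Sum>m=0..n. of_nat m * fps_nth H m * fps_nth (P ^ (m - 1)) k * fps_nth Q (n - k))
            = fps_nth (fps_deriv H oo P) k * fps_nth Q (n - k)"
      proof (cases "k = n")
        case True thus ?thesis by (simp add: Qnth)
      next
        case False
        with k have kn: "k < n" by auto
        obtain n' where n': "n = Suc n'" using kn by (cases n) auto
        have "(\<Sum>m=0..n. of_nat m * fps_nth H m * fps_nth (P ^ (m - 1)) k)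
              = (\<Sum>i=0..n'. of_nat (Suc i) * fps_nth H (Suc i) * fps_nth (P ^ i) k)"
          unfolding n' by (subst sum.atLeast0_atMost_Suc_shift) simp
        also have "\<dots> = (\<Sum>i=0..k. of_nat (Suc i) * fps_nth H (Suc i) * fps_nth (P ^ i) k)"
          using kn n' power_nth_vanish[OF P0] by (intro sum.mono_neutral_right) auto
        also have "\<dots> = fps_nth (fps_deriv H oo P) k"
          by (simp add: fps_compose_nth algebra_simps)
        finally show ?thesis by (simp add: sum_distrib_right[symmetric])
      qed
    qed
    finally show ?thesis .
  qed
  also have "(\<Sum>k=0..n. fps_nth (fps_deriv H oo P) k * fps_nth Q (n - k))
      = (\<Sum>k=0..R. fps_nth (fps_deriv H oo P) k * fps_nth Q (n - k))
        + (\<Sum>k=R+1..n. fps_nth (fps_deriv H oo P) k * fps_nth Q (n - k))"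
  proof -
    have "{0..n} = {0..R} \<union> {R+1..n}" using n by auto
    thus ?thesis by (simp add: sum.union_disjoint)
  qed
  also have "(\<Sum>k=0..R. fps_nth (fps_deriv H oo P) k * fps_nth Q (n - k))
           = (\<Sum>k\<le>R. fps_nth (fps_deriv H oo B) k * fps_nth B (n - k))"
    unfolding atLeast0AtMost
  proof (rule sum.cong[OF refl])
    fix k assume k: "k \<in> {..R}"
    have "fps_nth (fps_deriv H oo P) k = fps_nth (fps_deriv H oo B) k"
      using k by (intro compose_trunc[of R]) (auto simp: P_def)
    moreover have "fps_nth Q (n - k) = fps_nth B (n - k)" using k n by (auto simp: Qnth)
    ultimately show "fps_nth (fps_deriv H oo P) k * fps_nth Q (n - k) = fps_nth (fps_deriv H oo B) k * fps_nth B (n - k)"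
      by simp
  qed
  finally show ?thesis by (simp add: algebra_simps)
qed

lemma Wp_self: "Wp (x::'a::comm_ring_1) x m = of_nat (m choose 2) * x ^ (m - 2)"
proof (induction m)
  case 0 thus ?case by (simp add: numeral_2_eq_2)
next
  case (Suc m)
  show ?case
  proof (cases "m \<ge> 2")
    case True
    have sm: "Suc (m - 2) = m - 1" using True by simp
    have e: "x * x ^ (m - 2) = x ^ (m - 1)"
      using power_Suc[of x "m - 2"] unfolding sm by simp
    have c: "(Suc m choose 2) = (m choose 2) + m"
      by (simp add: numeral_2_eq_2 choose_one)
    show ?thesis using True by (simp add: Suc e c algebra_simps mult.left_commute[of x])
  next
    case False
    then consider "m = 0" | "m = 1" by linarith
    thus ?thesis by cases (simp_all add: numeral_2_eq_2)
  qed
qed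

lemma maj_of_nat_mult:
  fixes F :: "'a::real_normed_field fps"
  assumes "maj F G" shows "maj (of_nat m * F) (of_nat m * G)"
  using maj_cmult[OF assms, of "of_nat m"] by (simp add: fps_of_nat)

lemma maj_Wp:
  fixes P B :: "'a::real_normed_field fps"
  assumes "maj P Ch" "maj B Ch"
  shows "maj (Wp P B m) (Wp Ch Ch m)"
proof (induction m)
  case 0 thus ?case by (simp add: maj_zero)
next
  case (Suc m)
  show ?case using Suc assms
    by (simp add: maj_add maj_mult maj_of_nat_mult maj_power)
qed

lemma T2_bound:
  fixes G Q :: "complex fps"
  assumes \<beta>: "\<beta> > 0" and s: "s \<ge> 1" and D: "D \<ge> 0" and K: "K \<ge> 0"
    and Gb: "\<And>k. k \<ge> 1 \<Longrightarrow> norm (fps_nth G k) \<le> D * scale a \<beta> \<gamma> k"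
    and Qlow: "\<And>k. k < s \<Longrightarrow> fps_nth Q k = 0"
    and Qb: "\<And>k. norm (fps_nth Q k) \<le> K * scale a \<beta> \<gamma> k"
    and Dsb: "(\<Sum>k=s..n-s. scale a \<beta> \<gamma> k * scale a \<beta> \<gamma> (n-k)) \<le> Ds * scale a \<beta> \<gamma> (n-s)"
    and n: "n \<ge> 2 * s"
  shows "norm (\<Sum>k=s..n. fps_nth G k * fps_nth Q (n - k)) \<le> D * K * Ds * scale a \<beta> \<gamma> (n - s)"
proof -
  define c where "c = scale a \<beta> \<gamma>"
  have cnn: "c k \<ge> 0" for k unfolding c_def using \<beta> by (rule scale_nonneg)
  define Gh where "Gh = Abs_fps (\<lambda>k. if k < s then 0 else D * c k)"
  define Qh where "Qh = Abs_fps (\<lambda>k. if k < s then 0 else K * c k)"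
  have Ghnn: "fps_nth Gh k \<ge> 0" for k using D cnn by (simp add: Gh_def)
  have Qhnn: "fps_nth Qh k \<ge> 0" for k using K cnn by (simp add: Qh_def)
  have Qmaj: "norm (fps_nth Q k) \<le> fps_nth Qh k" for k
    using Qlow[of k] Qb[of k] by (auto simp: Qh_def c_def)
  have "norm (\<Sum>k=s..n. fps_nth G k * fps_nth Q (n - k)) \<le> (\<Sum>k=s..n. norm (fps_nth G k) * norm (fps_nth Q (n - k)))"
    by (rule order.trans[OF norm_sum]) (simp add: norm_mult)
  also have "\<dots> \<le> (\<Sum>k=s..n. fps_nth Gh k * fps_nth Qh (n - k))"
  proof (rule sum_mono)
    fix k assume k: "k \<in> {s..n}"
    have "norm (fps_nth G k) \<le> fps_nth Gh k" using k s Gb[of k] by (auto simp: Gh_def c_def)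
    thus "norm (fps_nth G k) * norm (fps_nth Q (n - k)) \<le> fps_nth Gh k * fps_nth Qh (n - k)"
      by (intro mult_mono Qmaj) (auto simp: Ghnn)
  qed
  also have "\<dots> \<le> (\<Sum>k=0..n. fps_nth Gh k * fps_nth Qh (n - k))"
    by (intro sum_mono2) (auto intro: mult_nonneg_nonneg Ghnn Qhnn)
  also have "\<dots> = fps_nth (Gh * Qh) n" by (simp add: fps_mult_nth)
  also have "\<dots> \<le> D * K * Ds * c (n - s)"
    by (rule tail_bound[where c = c]) (use Ghnn Qhnn cnn s D K n Dsb in \<open>auto simp: Gh_def Qh_def c_def\<close>)
  finally show ?thesis by (simp add: c_def)
qed


lemma T3_bound:
  fixes H P B Q :: "complex fps"
  assumes \<beta>: "\<beta> > 0" and a: "a > 0" and s: "s \<ge> 1" and M: "M \<ge> 0" and lam: "lam \<ge> 0"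
    and Hb: "\<And>m. norm (fps_nth H m) \<le> M * lam ^ m" and K: "K \<ge> 0"
    and Pb: "\<And>k. norm (fps_nth P k) \<le> K * scale a \<beta> \<gamma> k"
    and Bb: "\<And>k. norm (fps_nth B k) \<le> K * scale a \<beta> \<gamma> k"
    and Qlow: "\<And>k. k < s \<Longrightarrow> fps_nth Q k = 0"
    and Qb: "\<And>k. norm (fps_nth Q k) \<le> K * scale a \<beta> \<gamma> k"
  shows "\<exists>E. \<forall>n \<ge> 2 * s. norm (\<Sum>m=0..n. fps_nth H m * fps_nth (Q ^ 2 * Wp P B m) n) \<le> E * scale a \<beta> \<gamma> (n - s)"
proof -
  define c where "c = scale a \<beta> \<gamma>"
  have cnn: "c k \<ge> 0" for k unfolding c_def using \<beta> by (rule scale_nonneg)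
  define Ch where "Ch = Abs_fps (\<lambda>k. K * c k)"
  define Qh where "Qh = Abs_fps (\<lambda>k. if k < s then 0 else K * c k)"
  have Chnn: "fps_nth Ch k \<ge> 0" for k using K cnn by (simp add: Ch_def)
  have Qhnn: "fps_nth Qh k \<ge> 0" for k using K cnn by (simp add: Qh_def)
  have majP: "maj P Ch" using Pb by (simp add: maj_def Ch_def c_def)
  have majB: "maj B Ch" using Bb by (simp add: maj_def Ch_def c_def)
  have majQ: "maj Q Qh" unfolding maj_def using Qlow Qb by (auto simp: Qh_def c_def)
  define Phi where "Phi = fps_const (2 * lam) * Ch"
  have Phi_nth: "fps_nth Phi k = 2 * lam * K * c k" for k by (simp add: Phi_def Ch_def)
  have Phi0: "fps_nth Phi 0 = 0" by (simp add: Phi_nth c_def)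
  obtain DY where DY: "\<And>N t. t \<ge> 1 \<Longrightarrow> fps_nth (\<Sum>j\<le>N. Phi ^ j) t \<le> DY * c t"
    using core[OF \<beta> a, of Phi "2 * lam * K" \<gamma>] unfolding c_def[symmetric]
    by (auto simp: Phi_nth c_def intro: mult_nonneg_nonneg lam K cnn[unfolded c_def])
  obtain D1 where D1: "D1 \<ge> 0" "\<And>n. (\<Sum>k=1..n-1. c k * c (n-k)) \<le> D1 * c n"
    using conv_full[OF \<beta> a, of \<gamma>] unfolding c_def by auto
  obtain Ds where Ds: "\<And>n. n \<ge> 2 * s \<Longrightarrow> (\<Sum>k=s..n-s. c k * c (n-k)) \<le> Ds * c (n-s)"
    using conv_tail[OF \<beta> s a, of \<gamma>] unfolding c_def by auto
  define Ds' where "Ds' = max Ds 0"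
  have Ds': "\<And>n. n \<ge> 2 * s \<Longrightarrow> (\<Sum>k=s..n-s. c k * c (n-k)) \<le> Ds' * c (n-s)"
    using Ds cnn unfolding Ds'_def by (meson max.cobounded1 mult_right_mono order.trans)
  define AY where "AY = max DY 1"
  define KZ where "KZ = K * AY * (2 + D1)"
  have KZ0: "KZ \<ge> 0" using K D1 by (simp add: KZ_def AY_def)
  show ?thesis
  proof (intro exI[of _ "M * (2 * lam)^2 * (K * KZ * Ds')"] allI impI)
    fix n :: nat assume n: "n \<ge> 2 * s"
    define Y where "Y = (\<Sum>j\<le>n. Phi ^ j)"
    have Ynn: "fps_nth Y t \<ge> 0" for t
      unfolding Y_def fps_sum_nth
      by (intro sum_nonneg maj_nonneg[OF maj_power[OF maj_self]]) (simp add: Phi_nth lam K cnn)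
    have Y0: "fps_nth Y 0 \<le> AY" unfolding Y_def using geo_nth0[OF Phi0] by (simp add: AY_def)
    have Yt: "fps_nth Y t \<le> AY * c t" if "t \<ge> 1" for t
    proof -
      have "fps_nth Y t \<le> DY * c t" unfolding Y_def using DY that by blast
      also have "\<dots> \<le> AY * c t" using cnn by (intro mult_right_mono) (auto simp: AY_def)
      finally show ?thesis .
    qed
    define Z where "Z = Qh * Y"
    have Znn: "fps_nth Z t \<ge> 0" for t unfolding Z_def fps_mult_nth
      by (intro sum_nonneg mult_nonneg_nonneg Qhnn Ynn)
    have Zlow: "fps_nth Z t = 0" if "t < s" for t
      unfolding Z_def using that by (intro low_vanish_mult[of s]) (auto simp: Qh_def)
    have Zt: "fps_nth Z t \<le> KZ * c t" if "t \<ge> 1" for t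
    proof -
      have "fps_nth (Qh * Y) t \<le> K * AY * (2 + D1) * c t"
        by (rule prod_bound[where c = c]) (use Qhnn Ynn Y0 Yt cnn D1 K s that in \<open>auto simp: Qh_def\<close>)
      thus ?thesis by (simp add: Z_def KZ_def)
    qed
    have QZ: "fps_nth (Qh * Z) n \<le> K * KZ * Ds' * c (n - s)"
      by (rule tail_bound[where c = c]) (use Qhnn Znn Zlow Zt cnn s K KZ0 n Ds'[OF n] in \<open>auto simp: Qh_def Ds'_def\<close>)
    define g where "g = (\<lambda>m. M * lam ^ m * (of_nat (m choose 2) * fps_nth (Qh ^ 2 * Ch ^ (m - 2)) n))"
    have "norm (\<Sum>m=0..n. fps_nth H m * fps_nth (Q ^ 2 * Wp P B m) n)
          \<le> (\<Sum>m=0..n. norm (fps_nth H m) * norm (fps_nth (Q ^ 2 * Wp P B m) n))"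
      by (rule order.trans[OF norm_sum]) (simp add: norm_mult)
    also have "\<dots> \<le> (\<Sum>m=0..n. (M * lam ^ m) * fps_nth (Qh ^ 2 * Wp Ch Ch m) n)"
      by (intro sum_mono mult_mono Hb majD[OF maj_mult[OF maj_power[OF majQ] maj_Wp[OF majP majB]]])
         (use M lam in auto)
    also have "\<dots> = (\<Sum>m=0..n. g m)"
    proof (rule sum.cong[OF refl])
      fix m
      have "Qh ^ 2 * Wp Ch Ch m = of_nat (m choose 2) * (Qh ^ 2 * Ch ^ (m - 2))"
        unfolding Wp_self by (simp only: mult.left_commute)
      thus "(M * lam ^ m) * fps_nth (Qh ^ 2 * Wp Ch Ch m) n = g m"
        by (simp only: g_def nth_of_nat_mult)
    qed
    also have "(\<Sum>m=0..n. g m) = (\<Sum>m=2..n. g m)"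
      using n s by (intro sum.mono_neutral_right) (auto simp: g_def numeral_2_eq_2 less_Suc_eq)
    also have "\<dots> = (\<Sum>j=0..n-2. g (j + 2))"
    proof -
      have "{2..n} = {0+2..(n-2)+2}" using n s by auto
      thus ?thesis by (simp only: sum.shift_bounds_cl_nat_ivl)
    qed
    also have "\<dots> \<le> (\<Sum>j=0..n-2. M * (2 * lam)^2 * fps_nth (Qh ^ 2 * Phi ^ j) n)"
    proof (rule sum_mono)
      fix j
      have X: "fps_nth (Qh ^ 2 * Ch ^ j) n \<ge> 0"
        by (rule maj_nonneg[OF maj_mult[OF maj_power[OF maj_self[OF Qhnn]] maj_power[OF maj_self[OF Chnn]]]])
      have "lam ^ (j + 2) * of_nat ((j + 2) choose 2) \<le> lam ^ (j + 2) * 2 ^ (j + 2)"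
      proof -
        have "(j+2) choose 2 \<le> 2^(j+2)" by (rule binomial_le_pow2)
        hence "real ((j+2) choose 2) \<le> real (2^(j+2))" by (rule of_nat_mono)
        hence "of_nat ((j + 2) choose 2) \<le> (2::real) ^ (j + 2)" by simp
        thus ?thesis using lam by (intro mult_left_mono) auto
      qed
      also have "\<dots> = (2 * lam) ^ 2 * (2 * lam) ^ j" by (simp add: power_add power_mult_distrib power2_eq_square algebra_simps)
      finally have L: "lam ^ (j + 2) * of_nat ((j + 2) choose 2) \<le> (2 * lam) ^ 2 * (2 * lam) ^ j" .
      have "g (j + 2) = M * (lam ^ (j + 2) * of_nat ((j + 2) choose 2)) * fps_nth (Qh ^ 2 * Ch ^ j) n"
        by (simp add: g_def)
      also have "\<dots> \<le> M * ((2 * lam) ^ 2 * (2 * lam) ^ j) * fps_nth (Qh ^ 2 * Ch ^ j) n"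
        using L M X by (intro mult_right_mono mult_left_mono) auto
      also have "\<dots> = M * (2 * lam)^2 * fps_nth (Qh ^ 2 * Phi ^ j) n"
      proof -
        have "Qh ^ 2 * Phi ^ j = fps_const ((2*lam)^j) * (Qh^2 * Ch^j)"
          by (simp add: Phi_def power_mult_distrib fps_const_power mult_ac)
        hence "fps_nth (Qh ^ 2 * Phi ^ j) n = (2*lam)^j * fps_nth (Qh^2 * Ch^j) n"
          by (simp add: fps_const_mult_left)
        thus ?thesis by (simp add: algebra_simps)
      qed
      finally show "g (j + 2) \<le> M * (2 * lam)^2 * fps_nth (Qh ^ 2 * Phi ^ j) n" .
    qed
    also have "\<dots> \<le> (\<Sum>j=0..n. M * (2 * lam)^2 * fps_nth (Qh ^ 2 * Phi ^ j) n)"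
    proof (intro sum_mono2 mult_nonneg_nonneg)
      have Phinn: "fps_nth Phi k \<ge> 0" for k by (simp add: Phi_nth lam K cnn)
      show "0 \<le> fps_nth (Qh ^ 2 * Phi ^ j) n" for j
        by (rule maj_nonneg[OF maj_mult[OF maj_power[OF maj_self[OF Qhnn]] maj_power[OF maj_self[OF Phinn]]]])
    qed (use M lam in auto)
    also have "\<dots> = M * (2 * lam)^2 * fps_nth (Qh * Z) n"
      by (simp add: Z_def Y_def sum_distrib_left fps_sum_nth atLeast0AtMost power2_eq_square algebra_simps)
    also have "\<dots> \<le> M * (2 * lam)^2 * (K * KZ * Ds' * c (n - s))"
      using QZ M by (intro mult_left_mono) auto
    finally show "norm (\<Sum>m=0..n. fps_nth H m * fps_nth (Q ^ 2 * Wp P B m) n) \<le> M * (2 * lam)^2 * (K * KZ * Ds') * scale a \<beta> \<gamma> (n - s)"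
      by (simp add: c_def algebra_simps)
  qed
qed

lemma scale_shift_r:
  assumes \<beta>: "\<beta> > 0" and a: "a > 0" and n: "2 * Suc (2 * r) \<le> n"
  shows "scale a \<beta> \<gamma> (n - Suc (2 * r)) \<le> 2 powr \<bar>\<gamma>\<bar> / \<beta> ^ Suc (2 * r) * (scale a \<beta> \<gamma> n / real n ^ r)"
proof -
  have n1: "n \<ge> 1" using n by auto
  have "scale a \<beta> \<gamma> (n - Suc (2 * r)) \<le> 2 powr \<bar>\<gamma>\<bar> / \<beta> ^ Suc (2 * r) * scale a \<beta> \<gamma> n * real n powr (-(real a / 2 * real (Suc (2 * r))))"
    using scale_shift[OF \<beta> n n1] by simp
  also have "real n powr (-(real a / 2 * real (Suc (2 * r)))) \<le> real n powr (- real r)"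
  proof (rule powr_mono)
    have "real a \<ge> 1" using a by simp
    hence "real a / 2 * real (Suc (2 * r)) \<ge> 1 / 2 * real (Suc (2 * r))"
      by (intro mult_right_mono) auto
    thus "-(real a / 2 * real (Suc (2 * r))) \<le> - real r" by simp
  qed (use n1 in auto)
  also have "real n powr (- real r) = 1 / real n ^ r"
    using n1 by (simp add: powr_minus_divide powr_realpow)
  finally show ?thesis
    using \<beta> scale_nonneg[OF \<beta>, of a \<gamma> n] by (simp add: mult_left_mono divide_simps)
qed

lemma main_error:
  fixes H B :: "complex fps" and r :: nat
  assumes \<beta>: "\<beta> > 0" and a: "a > 0" and Hr: "fps_conv_radius H > 0" and B0: "fps_nth B 0 = 0"
    and K: "K \<ge> 0" and Bb: "\<And>k. norm (fps_nth B k) \<le> K * scale a \<beta> \<gamma> k"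
  shows "\<exists>E N. \<forall>n \<ge> N. norm (fps_nth (H oo B) n - (\<Sum>k\<le>2 * r. fps_nth (fps_deriv H oo B) k * fps_nth B (n - k)))
            \<le> E * (scale a \<beta> \<gamma> n / real n ^ r)"
proof -
  define R where "R = 2 * r"
  define s where "s = Suc R"
  have s1: "s \<ge> 1" by (simp add: s_def)
  define c where "c = scale a \<beta> \<gamma>"
  have cnn: "c k \<ge> 0" for k unfolding c_def using \<beta> by (rule scale_nonneg)
  define P where "P = Abs_fps (\<lambda>i. if i \<le> R then fps_nth B i else 0)"
  define Q where "Q = B - P"
  have Pnth: "fps_nth P i = (if i \<le> R then fps_nth B i else 0)" for i by (simp add: P_def)
  have Qnth: "fps_nth Q i = (if i \<le> R then 0 else fps_nth B i)" for i by (simp add: Q_def P_def)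
  have P0: "fps_nth P 0 = 0" using B0 by (simp add: Pnth)
  have Pb: "norm (fps_nth P k) \<le> K * c k" for k using Bb[of k] K cnn[of k] by (auto simp: Pnth c_def)
  have Qb: "norm (fps_nth Q k) \<le> K * c k" for k using Bb[of k] K cnn[of k] by (auto simp: Qnth c_def)
  have Qlow: "fps_nth Q k = 0" if "k < s" for k using that by (simp add: Qnth s_def)
  define c' where "c' = scale a \<beta> (\<gamma> - real r)"
  have c'nn: "c' k \<ge> 0" for k unfolding c'_def using \<beta> by (rule scale_nonneg)
  have c'pos: "c' k > 0" if "k \<ge> 1" for k unfolding c'_def using \<beta> that by (rule scale_pos)
  define KP where "KP = (\<Sum>i=1..R. norm (fps_nth B i) / c' i)"
  have KP0: "KP \<ge> 0" unfolding KP_def using c'nn by (intro sum_nonneg divide_nonneg_nonneg) auto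
  have Pb': "norm (fps_nth P k) \<le> KP * c' k" for k
  proof (cases "k \<ge> 1 \<and> k \<le> R")
    case True
    have "norm (fps_nth B k) / c' k \<le> KP" unfolding KP_def using True c'nn
      by (intro member_le_sum[where f = "\<lambda>i. norm (fps_nth B i) / c' i"]) (auto intro: divide_nonneg_nonneg)
    hence "norm (fps_nth B k) \<le> KP * c' k" using c'pos[of k] True by (simp add: divide_simps)
    thus ?thesis using True by (simp add: Pnth)
  next
    case False
    hence "fps_nth P k = 0" using P0 by (cases "k = 0") (auto simp: Pnth)
    thus ?thesis using KP0 c'nn by simp
  qed
  obtain M lam where Mlam: "M \<ge> 0" "lam \<ge> 0" "\<And>m. norm (fps_nth H m) \<le> M * lam ^ m"
    using coef_geom_bound[OF Hr] by blast
  obtain D1 where D1: "\<And>k. k \<ge> 1 \<Longrightarrow> norm (fps_nth (H oo P) k) \<le> D1 * c' k"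
    using compose_bound[OF \<beta> a Mlam(1,2), of H P KP "\<gamma> - real r"] Mlam(3) P0 KP0 Pb'
    unfolding c'_def by blast
  have c'_eq: "c' n = c n / real n ^ r" if "n \<ge> 1" for n
    using that by (simp add: c'_def c_def scale_def powr_diff powr_realpow)
  have Hr': "fps_conv_radius (fps_deriv H) > 0" using Hr fps_conv_radius_deriv[of H] by (meson less_le_trans)
  obtain M2 lam2 where M2: "M2 \<ge> 0" "lam2 \<ge> 0" "\<And>m. norm (fps_nth (fps_deriv H) m) \<le> M2 * lam2 ^ m"
    using coef_geom_bound[OF Hr'] by blast
  obtain D2 where D2: "\<And>k. k \<ge> 1 \<Longrightarrow> norm (fps_nth (fps_deriv H oo P) k) \<le> D2 * c k"
    using compose_bound[OF \<beta> a M2(1,2), of "fps_deriv H" P K \<gamma>] M2(3) P0 K Pb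
    unfolding c_def by blast
  define D2' where "D2' = max D2 0"
  have D2': "\<And>k. k \<ge> 1 \<Longrightarrow> norm (fps_nth (fps_deriv H oo P) k) \<le> D2' * c k"
    using D2 cnn unfolding D2'_def by (meson max.cobounded1 mult_right_mono order.trans)
  obtain Ds where Ds: "\<And>n. n \<ge> 2 * s \<Longrightarrow> (\<Sum>k=s..n-s. c k * c (n-k)) \<le> Ds * c (n-s)"
    using conv_tail[OF \<beta> s1 a, of \<gamma>] unfolding c_def by auto
  define Ds' where "Ds' = max Ds 0"
  have Ds': "\<And>n. n \<ge> 2 * s \<Longrightarrow> (\<Sum>k=s..n-s. c k * c (n-k)) \<le> Ds' * c (n-s)"
    using Ds cnn unfolding Ds'_def by (meson max.cobounded1 mult_right_mono order.trans)
  obtain E3 where E3: "\<And>n. n \<ge> 2 * s \<Longrightarrow> norm (\<Sum>m=0..n. fps_nth H m * fps_nth (Q ^ 2 * Wp P B m) n) \<le> E3 * c (n - s)"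
    using T3_bound[OF \<beta> a s1 Mlam(1,2) Mlam(3) K, of P \<gamma> B Q] Pb Bb Qlow Qb unfolding c_def by blast
  define E3' where "E3' = max E3 0"
  define Ksh where "Ksh = 2 powr \<bar>\<gamma>\<bar> / \<beta> ^ s"
  have Ksh0: "Ksh \<ge> 0" using \<beta> by (simp add: Ksh_def)
  show ?thesis
  proof (intro exI[of _ "max D1 0 + (D2' * K * Ds' + E3') * Ksh"] exI[of _ "2 * s"] allI impI)
    fix n :: nat assume n: "n \<ge> 2 * s"
    have n1: "n \<ge> 1" and nR: "2 * R < n" using n by (auto simp: s_def)
    have sh: "c (n - s) \<le> Ksh * (c n / real n ^ r)"
      using scale_shift_r[OF \<beta> a, of r n \<gamma>] n by (simp add: c_def Ksh_def s_def R_def)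
    have ident: "fps_nth (H oo B) n - (\<Sum>k\<le>R. fps_nth (fps_deriv H oo B) k * fps_nth B (n - k))
        = fps_nth (H oo P) n + (\<Sum>k=R+1..n. fps_nth (fps_deriv H oo P) k * fps_nth Q (n - k))
          + (\<Sum>m=0..n. fps_nth H m * fps_nth (Q ^ 2 * Wp P B m) n)"
      using decomp_identity[OF B0 nR, of H] unfolding P_def[symmetric] Q_def[symmetric] by simp
    have t1: "norm (fps_nth (H oo P) n) \<le> max D1 0 * (c n / real n ^ r)"
    proof -
      have "norm (fps_nth (H oo P) n) \<le> D1 * c' n" by (rule D1[OF n1])
      also have "\<dots> \<le> max D1 0 * c' n" using c'nn by (intro mult_right_mono) auto
      finally show ?thesis using c'_eq[OF n1] by simp
    qed
    have t2: "norm (\<Sum>k=R+1..n. fps_nth (fps_deriv H oo P) k * fps_nth Q (n - k)) \<le> D2' * K * Ds' * c (n - s)"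
      unfolding c_def using T2_bound[OF \<beta> s1 _ K D2'[unfolded c_def] Qlow Qb[unfolded c_def] Ds'[OF n, unfolded c_def] n]
      by (simp add: s_def D2'_def)
    have t3: "norm (\<Sum>m=0..n. fps_nth H m * fps_nth (Q ^ 2 * Wp P B m) n) \<le> E3' * c (n - s)"
      using E3[OF n] cnn[of "n-s"] unfolding E3'_def by (meson max.cobounded1 mult_right_mono order.trans)
    have "norm (fps_nth (H oo B) n - (\<Sum>k\<le>2 * r. fps_nth (fps_deriv H oo B) k * fps_nth B (n - k)))
          \<le> norm (fps_nth (H oo P) n) + norm (\<Sum>k=R+1..n. fps_nth (fps_deriv H oo P) k * fps_nth Q (n - k))
            + norm (\<Sum>m=0..n. fps_nth H m * fps_nth (Q ^ 2 * Wp P B m) n)"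
      unfolding R_def[symmetric] ident by (intro norm_triangle_le add_mono norm_triangle_ineq order.refl)
    also have "\<dots> \<le> max D1 0 * (c n / real n ^ r) + (D2' * K * Ds' + E3') * c (n - s)"
      using t1 t2 t3 by (simp add: algebra_simps)
    finally have F0: "norm (fps_nth (H oo B) n - (\<Sum>k\<le>2 * r. fps_nth (fps_deriv H oo B) k * fps_nth B (n - k)))
          \<le> max D1 0 * (c n / real n ^ r) + (D2' * K * Ds' + E3') * c (n - s)" .
    have "(D2' * K * Ds' + E3') * c (n - s) \<le> (D2' * K * Ds' + E3') * (Ksh * (c n / real n ^ r))"
      using sh K by (intro mult_left_mono) (auto simp: D2'_def Ds'_def E3'_def)
    with F0 have F: "norm (fps_nth (H oo B) n - (\<Sum>k\<le>2 * r. fps_nth (fps_deriv H oo B) k * fps_nth B (n - k)))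
          \<le> max D1 0 * (c n / real n ^ r) + (D2' * K * Ds' + E3') * (Ksh * (c n / real n ^ r))" by linarith
    have "max D1 0 * (c n / real n ^ r) + (D2' * K * Ds' + E3') * (Ksh * (c n / real n ^ r))
          = (max D1 0 + (D2' * K * Ds' + E3') * Ksh) * (c n / real n ^ r)"
      by (simp only: distrib_right mult.assoc mult.commute[of Ksh])
    with F show "norm (fps_nth (H oo B) n - (\<Sum>k\<le>2 * r. fps_nth (fps_deriv H oo B) k * fps_nth B (n - k)))
          \<le> (max D1 0 + (D2' * K * Ds' + E3') * Ksh) * (scale a \<beta> \<gamma> n / real n ^ r)"
      by (simp only: c_def)
  qed
qed

lemma fps_asymp:
  fixes f :: "complex \<Rightarrow> complex"
  assumes "f has_fps_expansion F"
  shows "\<exists>C N. \<forall>n \<ge> N. norm (f (1 / of_nat n) - (\<Sum>l<r. fps_nth F l / of_nat n ^ l)) \<le> C / real n ^ r"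
proof -
  have rad: "fps_conv_radius F > 0" and ev: "eventually (\<lambda>z. eval_fps F z = f z) (nhds 0)"
    using assms by (auto simp: has_fps_expansion_def)
  obtain \<delta> where \<delta>: "\<delta> > 0" "\<And>z. dist z 0 < \<delta> \<Longrightarrow> eval_fps F z = f z"
    using ev unfolding eventually_nhds_metric by blast
  obtain \<rho>0 where \<rho>0: "0 < ereal \<rho>0" "ereal \<rho>0 < fps_conv_radius F"
    using ereal_dense2[OF rad] by blast
  define \<rho> where "\<rho> = min \<rho>0 (\<delta> / 2)"
  have \<rho>pos: "\<rho> > 0" using \<rho>0 \<delta> by (simp add: \<rho>_def)
  have \<rho>rad: "ereal \<rho> < fps_conv_radius F"
    using \<rho>0(2) by (rule le_less_trans[rotated]) (simp add: \<rho>_def)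
  define G where "G = fps_shift r F"
  have Grad: "fps_conv_radius G = fps_conv_radius F" by (simp add: G_def)
  have sub: "cball (0::complex) \<rho> \<subseteq> eball 0 (fps_conv_radius G)"
  proof
    fix z :: complex assume "z \<in> cball 0 \<rho>"
    hence "ereal (norm z) \<le> ereal \<rho>" by simp
    also have "\<dots> < fps_conv_radius G" using \<rho>rad by (simp add: Grad)
    finally show "z \<in> eball 0 (fps_conv_radius G)" by simp
  qed
  have "continuous_on (cball 0 \<rho>) (eval_fps G)"
    by (rule continuous_on_subset[OF continuous_on_eval_fps sub])
  hence "compact (eval_fps G ` cball 0 \<rho>)" by (intro compact_continuous_image) auto
  then obtain Bd where Bd: "\<And>z. z \<in> cball 0 \<rho> \<Longrightarrow> norm (eval_fps G z) \<le> Bd"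
    using compact_imp_bounded[of "eval_fps G ` cball 0 \<rho>"] unfolding bounded_iff by blast
  define N where "N = nat \<lceil>1 / \<rho>\<rceil> + 1"
  show ?thesis
  proof (intro exI[of _ "max Bd 0"] exI[of _ N] allI impI)
    fix n assume n: "n \<ge> N"
    have npos: "real n > 0" using n by (simp add: N_def)
    have "real n \<ge> 1 / \<rho>"
    proof -
      have "1 / \<rho> \<le> real (nat \<lceil>1 / \<rho>\<rceil>)" by linarith
      thus ?thesis using n unfolding N_def by linarith
    qed
    hence nr: "1 / real n \<le> \<rho>" using npos \<rho>pos by (simp add: field_simps)
    define z where "z = 1 / (of_nat n :: complex)"
    have nz: "norm z = 1 / real n" by (simp add: z_def norm_divide)
    have zc: "z \<in> cball 0 \<rho>" using nz nr by simp
    have z\<delta>: "dist z 0 < \<delta>" using nz nr \<rho>pos \<delta> by (simp add: \<rho>_def)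
    have zrad: "ereal (norm z) < fps_conv_radius F"
      using zc sub by (auto simp: Grad)
    have sF: "summable (\<lambda>l. fps_nth F l * z ^ l)" using zrad by (intro summable_fps) simp
    have sG: "summable (\<lambda>l. fps_nth G l * z ^ l)" using zrad by (intro summable_fps) (simp add: Grad)
    have "f z = eval_fps F z" using \<delta>(2)[OF z\<delta>] by simp
    also have "\<dots> = (\<Sum>l. fps_nth F (l + r) * z ^ (l + r)) + (\<Sum>l<r. fps_nth F l * z ^ l)"
      unfolding eval_fps_def by (rule suminf_split_initial_segment[OF sF])
    also have "(\<Sum>l. fps_nth F (l + r) * z ^ (l + r)) = z ^ r * eval_fps G z"
    proof -
      have "(\<Sum>l. fps_nth F (l + r) * z ^ (l + r)) = (\<Sum>l. z ^ r * (fps_nth G l * z ^ l))"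
        by (simp add: G_def power_add algebra_simps)
      also have "\<dots> = z ^ r * eval_fps G z" unfolding eval_fps_def by (rule suminf_mult[OF sG])
      finally show ?thesis .
    qed
    also have "(\<Sum>l<r. fps_nth F l * z ^ l) = (\<Sum>l<r. fps_nth F l / of_nat n ^ l)"
      by (simp add: z_def power_one_over divide_inverse power_inverse)
    finally have "f (1 / of_nat n) - (\<Sum>l<r. fps_nth F l / of_nat n ^ l) = z ^ r * eval_fps G z"
      by (simp add: z_def)
    hence "norm (f (1 / of_nat n) - (\<Sum>l<r. fps_nth F l / of_nat n ^ l)) = (1 / real n) ^ r * norm (eval_fps G z)"
      by (simp add: norm_mult norm_power nz)
    also have "\<dots> \<le> (1 / real n) ^ r * max Bd 0" using Bd[OF zc] by (intro mult_left_mono) auto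
    finally show "norm (f (1 / of_nat n) - (\<Sum>l<r. fps_nth F l / of_nat n ^ l)) \<le> max Bd 0 / real n ^ r"
      by (simp add: power_one_over divide_inverse mult.commute power_inverse)
  qed
qed

lemma has_fps_expansion_ln1: "(\<lambda>w::complex. ln (1 + w)) has_fps_expansion fps_ln 1"
proof -
  have ev: "eventually (\<lambda>w::complex. dist w 0 < 1) (nhds 0)"
    unfolding eventually_nhds_metric by (intro exI[of _ 1]) auto
  have "eventually (\<lambda>w::complex. eval_fps (fps_ln 1) w = ln (1 + w)) (nhds 0)"
  proof (rule eventually_mono[OF ev])
    fix w :: complex assume "dist w 0 < 1"
    hence w: "norm w < 1" by simp
    have "(\<lambda>n. - ((-w)^n) / of_nat n) sums ln (1 + w)" by (rule Ln_series'[OF w])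
    moreover have "(\<lambda>n. - ((-w)^n) / of_nat n) = (\<lambda>n. fps_nth (fps_ln 1) n * w ^ n)"
    proof
      fix n :: nat
      show "- ((-w)^n) / of_nat n = fps_nth (fps_ln 1) n * w ^ n"
      proof (cases n)
        case 0 thus ?thesis by (simp add: fps_ln_nth)
      next
        case (Suc m)
        thus ?thesis by (simp add: fps_ln_nth power_minus' field_simps)
      qed
    qed
    ultimately show "eval_fps (fps_ln 1) w = ln (1 + w)"
      unfolding eval_fps_def by (simp add: sums_iff)
  qed
  thus ?thesis by (auto simp: has_fps_expansion_def)
qed

lemma has_fps_expansion_shift1:
  fixes F :: "complex fps"
  assumes f: "f has_fps_expansion F" and F0: "fps_nth F 0 = 0"
  shows "(\<lambda>x. if x = 0 then fps_nth F 1 else f x / x) has_fps_expansion fps_shift 1 F"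
proof (cases "F = 0")
  case True
  have "eventually (\<lambda>z. f z = 0) (nhds 0)" using f True by (simp add: has_fps_expansion_0_iff)
  hence "eventually (\<lambda>z. (if z = 0 then fps_nth F 1 else f z / z) = 0) (nhds 0)"
    by (rule eventually_mono) (auto simp: True)
  thus ?thesis using True by (simp add: has_fps_expansion_0_iff)
next
  case False
  have "1 \<le> subdegree F" using False F0 by (intro subdegree_geI) auto
  from has_fps_expansion_shift[OF f this refl] show ?thesis by (simp only: power_one_right)
qed

lemma exp_L: "(\<lambda>z::complex. (- K) * z) has_fps_expansion (- fps_const K * fps_X)"
  using has_fps_expansion_cmult_left[OF has_fps_expansion_fps_X, of "- K"] by simp

lemma exp_bin:
  "(\<lambda>z::complex. (1 + (- K) * z) powr c) has_fps_expansion (fps_binomial c oo (- fps_const K * fps_X))"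
  using has_fps_expansion_compose[OF has_fps_expansion_binomial_complex[of c] exp_L[of K]]
  by (simp add: o_def)

definition Sfun :: "complex \<Rightarrow> complex \<Rightarrow> complex" where
  "Sfun K z = (if z = 0 then 0 else (ln (1 + (- K) * z) + K * z) / z)"

lemma exp_S:
  "Sfun K has_fps_expansion fps_shift 1 ((fps_ln 1 oo (- fps_const K * fps_X)) + fps_const K * fps_X)"
proof -
  have A: "(\<lambda>z. ln (1 + (- K) * z) + K * z) has_fps_expansion ((fps_ln 1 oo (- fps_const K * fps_X)) + fps_const K * fps_X)"
    using has_fps_expansion_add[OF has_fps_expansion_compose[OF has_fps_expansion_ln1 exp_L[of K]]
          has_fps_expansion_cmult_left[OF has_fps_expansion_fps_X, of K]]
    by (simp add: o_def)
  have n0: "fps_nth ((fps_ln 1 oo (- fps_const K * fps_X)) + fps_const K * fps_X) 0 = 0"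
    by (simp add: fps_compose_nth fps_ln_nth)
  have n1: "fps_nth ((fps_ln 1 oo (- fps_const K * fps_X)) + fps_const K * fps_X) 1 = 0"
    by (simp add: fps_compose_nth fps_ln_nth)
  from has_fps_expansion_shift1[OF A n0] show ?thesis
    unfolding n1 by (simp add: Sfun_def[abs_def])
qed

lemma exp_E:
  "(\<lambda>z. exp (\<alpha> * Sfun K z)) has_fps_expansion
     (fps_exp 1 oo (fps_const \<alpha> * fps_shift 1 ((fps_ln 1 oo (- fps_const K * fps_X)) + fps_const K * fps_X)))"
proof -
  have n1: "fps_nth ((fps_ln 1 oo (- fps_const K * fps_X)) + fps_const K * fps_X) 1 = 0"
    by (simp add: fps_compose_nth fps_ln_nth)
  show ?thesis
    using has_fps_expansion_compose[OF has_fps_expansion_exp1 has_fps_expansion_cmult_left[OF exp_S, of \<alpha> K]]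
    by (simp add: o_def n1 fps_ln_nth)
qed

definition wfun :: "complex \<Rightarrow> complex \<Rightarrow> complex" where
  "wfun K z = (if z = 0 then 0 else z / (1 - K * z))"

lemma exp_w: "wfun K has_fps_expansion (fps_X / (1 - fps_const K * fps_X))"
proof -
  have D: "(\<lambda>z. 1 - K * z) has_fps_expansion (1 - fps_const K * fps_X)"
    by (intro has_fps_expansion_diff has_fps_expansion_1 has_fps_expansion_cmult_left has_fps_expansion_fps_X)
  have sd: "subdegree (1 - fps_const K * fps_X) = 0" by (simp add: subdegree_eq_0_iff)
  have nz: "(1 - fps_const K * fps_X) \<noteq> 0"
  proof
    assume "(1 - fps_const K * fps_X) = 0"
    hence "fps_nth (1 - fps_const K * fps_X) 0 = 0" by simp
    thus False by simp
  qed
  note X = has_fps_expansion_divide[OF has_fps_expansion_fps_X D _ nz refl]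
  have "(\<lambda>x. if x = 0 then fps_nth fps_X (subdegree (1 - fps_const K * fps_X)) /
               fps_nth (1 - fps_const K * fps_X) (subdegree (1 - fps_const K * fps_X))
          else x / (1 - K * x)) = wfun K"
    unfolding sd by (auto simp: wfun_def fun_eq_iff)
  with X show ?thesis by simp
qed

lemma w_nth0: "fps_nth (fps_X / (1 - fps_const (K::complex) * fps_X)) 0 = 0"
  by (subst fps_divide_unit) auto

lemma mult_trunc:
  fixes A F G :: "'a::comm_ring_1 fps"
  assumes "\<And>i. i < r \<Longrightarrow> fps_nth F i = fps_nth G i" "l < r"
  shows "fps_nth (A * F) l = fps_nth (A * G) l"
  using assms by (auto simp: fps_mult_nth intro!: sum.cong)

lemma compose_trunc_outer:
  fixes Bt W :: "'a::comm_ring_1 fps"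
  assumes W0: "fps_nth W 0 = 0" and i: "i < r"
  shows "fps_nth (Bt oo W) i = fps_nth (\<Sum>l<r. fps_const (fps_nth Bt l) * W ^ l) i"
proof -
  have "fps_nth (\<Sum>l<r. fps_const (fps_nth Bt l) * W ^ l) i = (\<Sum>l<r. fps_nth Bt l * fps_nth (W ^ l) i)"
    by (simp add: fps_sum_nth)
  also have "\<dots> = (\<Sum>l=0..i. fps_nth Bt l * fps_nth (W ^ l) i)"
    using i power_nth_vanish[OF W0] by (intro sum.mono_neutral_right) auto
  also have "\<dots> = fps_nth (Bt oo W) i" by (simp add: fps_compose_nth)
  finally show ?thesis by simp
qed

lemma real_identity:
  fixes a j n :: nat and \<beta> \<gamma> :: real
  assumes \<beta>: "\<beta> > 0" and n: "2 * j < n"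
  shows "scale a \<beta> \<gamma> (n - 2 * j) = scale a \<beta> \<gamma> n * ((1 / real n) ^ (a * j) *
           (exp (-(real a / 2 * real (2 * j))) / \<beta> ^ (2 * j) *
            (1 - real (2 * j) / real n) powr (\<gamma> - real a / 2 * real (2 * j)) *
            exp (real a / 2 * ((ln (1 - real (2 * j) / real n) + real (2 * j) / real n) * real n))))"
proof -
  define x where "x = real n"
  define k where "k = real (2 * j)"
  define \<alpha> where "\<alpha> = real a / 2"
  define y where "y = 1 - k / x"
  have x: "x > 0" using n by (simp add: x_def)
  have kx: "k < x" using n by (simp add: x_def k_def)
  have y: "y > 0" using x kx by (simp add: y_def field_simps)
  have xy: "x - k = x * y" using x by (simp add: y_def field_simps)
  have rn: "real (n - 2 * j) = x - k" using n by (simp add: x_def k_def)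
  have ak: "\<alpha> * k = real (a * j)" by (simp add: \<alpha>_def k_def)
  have e1: "(x - k) powr (\<alpha> * (x - k)) = x powr (\<alpha> * x) * (1 / x) ^ (a * j) *
              (exp (-(\<alpha> * k)) * exp (\<alpha> * ((ln y + k / x) * x))) * y powr (-(\<alpha> * k))"
  proof -
    have "(x - k) powr (\<alpha> * (x - k)) = x powr (\<alpha> * (x - k)) * y powr (\<alpha> * (x - k))"
      unfolding xy using x y by (simp add: powr_mult)
    also have "x powr (\<alpha> * (x - k)) = x powr (\<alpha> * x) * x powr (-(\<alpha> * k))"
      by (simp add: powr_add[symmetric] algebra_simps)
    also have "x powr (-(\<alpha> * k)) = (1 / x) ^ (a * j)"
      unfolding ak powr_minus powr_realpow[OF x] by (simp add: power_one_over inverse_eq_divide)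
    also have "y powr (\<alpha> * (x - k)) = y powr (\<alpha> * x) * y powr (-(\<alpha> * k))"
      by (simp add: powr_add[symmetric] algebra_simps)
    also have "y powr (\<alpha> * x) = exp (-(\<alpha> * k)) * exp (\<alpha> * ((ln y + k / x) * x))"
    proof -
      have "y powr (\<alpha> * x) = exp (\<alpha> * x * ln y)" using y by (simp add: powr_def)
      also have "\<alpha> * x * ln y = -(\<alpha> * k) + \<alpha> * ((ln y + k / x) * x)" using x by (simp add: field_simps)
      finally show ?thesis by (simp add: exp_add[symmetric])
    qed
    finally show ?thesis by (simp add: algebra_simps)
  qed
  have e2: "(x - k) powr \<gamma> = x powr \<gamma> * y powr \<gamma>" unfolding xy using x y by (simp add: powr_mult)
  have e3: "\<beta> ^ (n - 2 * j) = \<beta> ^ n / \<beta> ^ (2 * j)" using n \<beta> by (simp add: power_diff)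
  have e4: "y powr (\<gamma> - \<alpha> * k) = y powr (-(\<alpha> * k)) * y powr \<gamma>" by (simp add: powr_add[symmetric])
  have "scale a \<beta> \<gamma> (n - 2 * j) = (x - k) powr (\<alpha> * (x - k)) * \<beta> ^ (n - 2 * j) * (x - k) powr \<gamma>"
    by (simp add: scale_def rn \<alpha>_def)
  also have "\<dots> = (x powr (\<alpha> * x) * \<beta> ^ n * x powr \<gamma>) * ((1 / x) ^ (a * j) *
           (exp (-(\<alpha> * k)) / \<beta> ^ (2 * j) * y powr (\<gamma> - \<alpha> * k) * exp (\<alpha> * ((ln y + k / x) * x))))"
    unfolding e1 e2 e3 e4 by (simp add: field_simps)
  finally show ?thesis by (simp add: scale_def x_def k_def \<alpha>_def y_def)
qed

definition gfun :: "nat \<Rightarrow> real \<Rightarrow> real \<Rightarrow> nat \<Rightarrow> complex \<Rightarrow> complex" where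
  "gfun a \<beta> \<gamma> j z = (let \<alpha> = complex_of_real (real a / 2); K = of_nat (2 * j) :: complex in
      exp (- (\<alpha> * K)) / complex_of_real \<beta> ^ (2 * j) * z ^ (a * j) *
      (1 + (- K) * z) powr (complex_of_real \<gamma> - \<alpha> * K) * exp (\<alpha> * Sfun K z))"

lemma gfun_value:
  assumes \<beta>: "\<beta> > 0" and n: "2 * j < n"
  shows "complex_of_real (scale a \<beta> \<gamma> n) * gfun a \<beta> \<gamma> j (1 / of_nat n) = complex_of_real (scale a \<beta> \<gamma> (n - 2 * j))"
proof -
  define x where "x = real n"
  define k where "k = real (2 * j)"
  define \<alpha> where "\<alpha> = real a / 2"
  have x: "x > 0" using n by (simp add: x_def)
  have kx: "k < x" using n by (simp add: x_def k_def)
  have y: "1 - k / x > 0" using x kx by (simp add: field_simps)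
  have z: "1 / (of_nat n :: complex) = complex_of_real (1 / x)" by (simp add: x_def)
  have K: "(of_nat (2 * j) :: complex) = complex_of_real k" by (simp add: k_def)
  have A: "complex_of_real (real a / 2) * of_nat (2 * j) = complex_of_real (\<alpha> * k)" by (simp add: \<alpha>_def k_def)
  have A': "complex_of_real (real a / 2) * complex_of_real k = complex_of_real (\<alpha> * k)" by (simp add: \<alpha>_def)
  have B: "1 + (- complex_of_real k) * complex_of_real (1 / x) = complex_of_real (1 - k / x)"
    by simp
  have C: "complex_of_real \<gamma> - complex_of_real (\<alpha> * k) = complex_of_real (\<gamma> - \<alpha> * k)" by simp
  have D: "Sfun (complex_of_real k) (complex_of_real (1 / x)) = complex_of_real ((ln (1 - k / x) + k / x) * x)"
  proof -
    have "ln (1 + (- complex_of_real k) * complex_of_real (1 / x)) = complex_of_real (ln (1 - k / x))"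
      unfolding B using y by (rule Ln_of_real)
    thus ?thesis using x by (simp add: Sfun_def field_simps)
  qed
  have F1: "exp (- (complex_of_real (real a / 2) * of_nat (2 * j))) = complex_of_real (exp (-(\<alpha> * k)))"
    unfolding A by (simp add: exp_of_real[symmetric])
  have F2: "complex_of_real \<beta> ^ (2 * j) = complex_of_real (\<beta> ^ (2 * j))" by simp
  have F3: "(1 / of_nat n :: complex) ^ (a * j) = complex_of_real ((1 / x) ^ (a * j))" unfolding z by simp
  have F4: "(1 + (- of_nat (2 * j)) * (1 / of_nat n)) powr (complex_of_real \<gamma> - complex_of_real (real a / 2) * of_nat (2 * j))
          = complex_of_real ((1 - k / x) powr (\<gamma> - \<alpha> * k))"
    unfolding z K B A' C using y by (intro powr_of_real) simp
  have F5: "exp (complex_of_real (real a / 2) * Sfun (of_nat (2 * j)) (1 / of_nat n))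
          = complex_of_real (exp (\<alpha> * ((ln (1 - k / x) + k / x) * x)))"
    unfolding z K D by (simp add: \<alpha>_def exp_of_real[symmetric])
  have "gfun a \<beta> \<gamma> j (1 / of_nat n) = complex_of_real ((1 / x) ^ (a * j) *
           (exp (-(\<alpha> * k)) / \<beta> ^ (2 * j) * (1 - k / x) powr (\<gamma> - \<alpha> * k) *
            exp (\<alpha> * ((ln (1 - k / x) + k / x) * x))))"
    unfolding gfun_def Let_def F1 F2 F3 F4 F5 by (simp add: field_simps)
  thus ?thesis
    using real_identity[OF \<beta> n, of a \<gamma>] by (simp add: x_def k_def \<alpha>_def)
qed

definition GK :: "nat \<Rightarrow> real \<Rightarrow> real \<Rightarrow> nat \<Rightarrow> complex fps" where
  "GK a \<beta> \<gamma> j = (let \<alpha> = complex_of_real (real a / 2); K = of_nat (2 * j) :: complex in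
      fps_const (exp (- (\<alpha> * K)) / complex_of_real \<beta> ^ (2 * j))
      * fps_X ^ (a * j)
      * (fps_binomial (complex_of_real \<gamma> - \<alpha> * K) oo (- fps_const K * fps_X))
      * (fps_exp 1 oo (fps_const \<alpha> *
            fps_shift 1 ((fps_ln 1 oo (- fps_const K * fps_X)) + fps_const K * fps_X))))"

lemma Btilde_even_GK:
  "Btilde_even a \<beta> \<gamma> Bt j = GK a \<beta> \<gamma> j * (Bt oo (fps_X / (1 - fps_const (of_nat (2 * j)) * fps_X)))"
  by (simp add: Btilde_even_def GK_def Let_def)

lemma gfun_expansion: "gfun a \<beta> \<gamma> j has_fps_expansion GK a \<beta> \<gamma> j"
  unfolding gfun_def[abs_def] GK_def Let_def
  by (intro has_fps_expansion_mult has_fps_expansion_cmult_left has_fps_expansion_fps_X_power exp_bin exp_E)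

definition phifun :: "complex fps \<Rightarrow> nat \<Rightarrow> nat \<Rightarrow> complex \<Rightarrow> complex" where
  "phifun Bt r j z = (\<Sum>l<r. fps_nth Bt l * wfun (of_nat (2 * j)) z ^ l)"

lemma phifun_expansion:
  "phifun Bt r j has_fps_expansion (\<Sum>l<r. fps_const (fps_nth Bt l) * (fps_X / (1 - fps_const (of_nat (2 * j)) * fps_X)) ^ l)"
  unfolding phifun_def[abs_def]
  by (intro has_fps_expansion_sum has_fps_expansion_cmult_left has_fps_expansion_power exp_w)

lemma phifun_value:
  assumes n: "2 * j < n"
  shows "phifun Bt r j (1 / of_nat n) = (\<Sum>l<r. fps_nth Bt l / of_nat (n - 2 * j) ^ l)"
proof -
  have "wfun (of_nat (2 * j)) (1 / of_nat n) = 1 / of_nat (n - 2 * j)"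
    using n by (simp add: wfun_def of_nat_diff field_simps)
  thus ?thesis by (simp add: phifun_def power_one_over divide_inverse power_inverse)
qed

lemma asymp_exp_evenD:
  assumes "asymp_exp_even f c F" and c: "\<And>n. c n \<ge> 0"
  shows "\<exists>C N. \<forall>m \<ge> N. norm (f (2 * m) - complex_of_real (c (2 * m)) * (\<Sum>l<r. fps_nth F l / of_nat (2 * m) ^ l))
            \<le> C * (c (2 * m) / real (2 * m) ^ r)"
proof -
  have "(\<lambda>m. f (2*m) - complex_of_real (c (2*m)) * (\<Sum>l<r. fps_nth F l / of_nat (2*m) ^ l))
                 \<in> O(\<lambda>m. complex_of_real (c (2*m)) / of_nat (2*m) ^ r)"
    using assms(1) unfolding asymp_exp_even_def by blast
  then obtain C where C: "eventually (\<lambda>m. norm (f (2*m) - complex_of_real (c (2*m)) * (\<Sum>l<r. fps_nth F l / of_nat (2*m) ^ l))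
                  \<le> C * norm (complex_of_real (c (2*m)) / of_nat (2*m) ^ r)) at_top"
    by (auto elim: landau_o.bigE)
  then obtain N where N: "\<And>m. m \<ge> N \<Longrightarrow> norm (f (2*m) - complex_of_real (c (2*m)) * (\<Sum>l<r. fps_nth F l / of_nat (2*m) ^ l))
                  \<le> C * norm (complex_of_real (c (2*m)) / of_nat (2*m) ^ r)"
    unfolding eventually_at_top_linorder by blast
  have "norm (complex_of_real (c (2*m)) / of_nat (2*m) ^ r) = c (2 * m) / real (2 * m) ^ r" for m
    using c[of "2*m"] by (simp add: norm_divide norm_power norm_mult)
  thus ?thesis using N by (intro exI[of _ C] exI[of _ N]) auto
qed

lemma per_j:
  fixes B Bt :: "complex fps"
  assumes \<beta>: "\<beta> > 0" and Basymp: "asymp_exp_even (\<lambda>n. fps_nth B n) (scale a \<beta> \<gamma>) Bt"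
  shows "\<exists>C N. \<forall>m \<ge> N. norm (fps_nth B (2 * m - 2 * j) - complex_of_real (scale a \<beta> \<gamma> (2 * m)) *
            (\<Sum>l<r. fps_nth (Btilde_even a \<beta> \<gamma> Bt j) l / of_nat (2 * m) ^ l))
            \<le> C * (scale a \<beta> \<gamma> (2 * m) / real (2 * m) ^ r)"
proof -
  define c where "c = scale a \<beta> \<gamma>"
  have cnn: "c k \<ge> 0" for k unfolding c_def using \<beta> by (rule scale_nonneg)
  obtain C0 N0 where C0: "\<And>m. m \<ge> N0 \<Longrightarrow> norm (fps_nth B (2 * m) - complex_of_real (c (2 * m)) * (\<Sum>l<r. fps_nth Bt l / of_nat (2 * m) ^ l))
            \<le> C0 * (c (2 * m) / real (2 * m) ^ r)"
    using asymp_exp_evenD[OF Basymp, of r] cnn unfolding c_def by blast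
  define W where "W = fps_X / (1 - fps_const (of_nat (2 * j) :: complex) * fps_X)"
  define Phi where "Phi = (\<Sum>l<r. fps_const (fps_nth Bt l) * W ^ l)"
  define psi where "psi = (\<lambda>z. gfun a \<beta> \<gamma> j z * phifun Bt r j z)"
  have psi_exp: "psi has_fps_expansion GK a \<beta> \<gamma> j * Phi"
    unfolding psi_def Phi_def W_def by (intro has_fps_expansion_mult gfun_expansion phifun_expansion)
  obtain C1 N1 where C1: "\<And>n. n \<ge> N1 \<Longrightarrow> norm (psi (1 / of_nat n) - (\<Sum>l<r. fps_nth (GK a \<beta> \<gamma> j * Phi) l / of_nat n ^ l)) \<le> C1 / real n ^ r"
    using fps_asymp[OF psi_exp, of r] by blast
  have coef: "fps_nth (GK a \<beta> \<gamma> j * Phi) l = fps_nth (Btilde_even a \<beta> \<gamma> Bt j) l" if "l < r" for l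
    unfolding Btilde_even_GK W_def[symmetric]
  proof (rule mult_trunc[OF _ that])
    fix i assume "i < r"
    thus "fps_nth Phi i = fps_nth (Bt oo W) i"
      unfolding Phi_def W_def by (intro compose_trunc_outer[symmetric] w_nth0)
  qed
  define Ksh where "Ksh = 2 powr \<bar>\<gamma>\<bar> / \<beta> ^ (2 * j)"
  show ?thesis
  proof (intro exI[of _ "\<bar>C0\<bar> * Ksh * 2 ^ r + \<bar>C1\<bar>"] exI[of _ "N0 + N1 + 2 * j + 1"] allI impI)
    fix m assume m: "m \<ge> N0 + N1 + 2 * j + 1"
    define n where "n = 2 * m"
    have n1: "n \<ge> 1" and nj: "2 * j < n" and n4: "2 * (2 * j) \<le> n" and nN1: "n \<ge> N1"
      using m by (auto simp: n_def)
    have mj: "m - j \<ge> N0" using m by auto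
    have nk: "2 * (m - j) = n - 2 * j" by (simp add: n_def)
    define S1 where "S1 = (\<Sum>l<r. fps_nth Bt l / of_nat (n - 2 * j) ^ l)"
    have key: "complex_of_real (c n) * psi (1 / of_nat n) = complex_of_real (c (n - 2 * j)) * S1"
    proof -
      have "complex_of_real (c n) * psi (1 / of_nat n) = (complex_of_real (c n) * gfun a \<beta> \<gamma> j (1 / of_nat n)) * phifun Bt r j (1 / of_nat n)"
        by (simp add: psi_def)
      also have "\<dots> = complex_of_real (c (n - 2 * j)) * S1"
        unfolding c_def gfun_value[OF \<beta> nj] phifun_value[OF nj] S1_def ..
      finally show ?thesis .
    qed
    have E1: "norm (fps_nth B (n - 2 * j) - complex_of_real (c (n - 2 * j)) * S1) \<le> C0 * (c (n - 2 * j) / real (n - 2 * j) ^ r)"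
      using C0[OF mj] unfolding nk S1_def by simp
    have E2: "norm (psi (1 / of_nat n) - (\<Sum>l<r. fps_nth (Btilde_even a \<beta> \<gamma> Bt j) l / of_nat n ^ l)) \<le> C1 / real n ^ r"
      using C1[OF nN1] coef by simp
    have shift: "c (n - 2 * j) \<le> Ksh * c n"
    proof -
      have "c (n - 2 * j) \<le> Ksh * c n * real n powr (-(real a / 2 * real (2 * j)))"
        unfolding c_def Ksh_def using scale_shift[OF \<beta> n4 n1, of a \<gamma>] by simp
      also have "\<dots> \<le> Ksh * c n * 1"
      proof (rule mult_left_mono)
        have "1 \<le> real n powr (real a / 2 * real (2 * j))" using n1 by (intro ge_one_powr_ge_zero) auto
        thus "real n powr (-(real a / 2 * real (2 * j))) \<le> 1" by (simp add: powr_minus_divide divide_le_eq)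
        show "0 \<le> Ksh * c n" using \<beta> cnn by (simp add: Ksh_def)
      qed
      finally show ?thesis by simp
    qed
    have half: "1 / real (n - 2 * j) ^ r \<le> 2 ^ r / real n ^ r"
    proof -
      have "real n \<le> 2 * real (n - 2 * j)" using n4 by simp
      hence "real n ^ r \<le> (2 * real (n - 2 * j)) ^ r" by (intro power_mono) auto
      hence "real n ^ r \<le> 2 ^ r * real (n - 2 * j) ^ r" by (simp add: power_mult_distrib)
      moreover have "real (n - 2 * j) > 0" "real n > 0" using nj by auto
      ultimately show ?thesis by (simp add: divide_simps mult.commute)
    qed
    define D where "D = psi (1 / of_nat n) - (\<Sum>l<r. fps_nth (Btilde_even a \<beta> \<gamma> Bt j) l / of_nat n ^ l)"
    have eq: "fps_nth B (n - 2 * j) - complex_of_real (c n) * (\<Sum>l<r. fps_nth (Btilde_even a \<beta> \<gamma> Bt j) l / of_nat n ^ l)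
        = (fps_nth B (n - 2 * j) - complex_of_real (c (n - 2 * j)) * S1) + complex_of_real (c n) * D"
      using key by (simp add: D_def algebra_simps)
    have "norm (fps_nth B (n - 2 * j) - complex_of_real (c n) * (\<Sum>l<r. fps_nth (Btilde_even a \<beta> \<gamma> Bt j) l / of_nat n ^ l))
        \<le> norm (fps_nth B (n - 2 * j) - complex_of_real (c (n - 2 * j)) * S1) + norm (complex_of_real (c n) * D)"
      unfolding eq by (rule norm_triangle_ineq)
    also have "norm (fps_nth B (n - 2 * j) - complex_of_real (c (n - 2 * j)) * S1) + norm (complex_of_real (c n) * D)
       = norm (fps_nth B (n - 2 * j) - complex_of_real (c (n - 2 * j)) * S1) + c n * norm (psi (1 / of_nat n) - (\<Sum>l<r. fps_nth (Btilde_even a \<beta> \<gamma> Bt j) l / of_nat n ^ l))"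
      using cnn[of n] by (simp add: norm_mult D_def)
    also have "\<dots> \<le> \<bar>C0\<bar> * (Ksh * c n * (2 ^ r / real n ^ r)) + c n * (\<bar>C1\<bar> / real n ^ r)"
    proof (rule add_mono)
      have "C0 * (c (n - 2 * j) / real (n - 2 * j) ^ r) \<le> \<bar>C0\<bar> * (c (n - 2 * j) * (1 / real (n - 2 * j) ^ r))"
      proof -
        have y: "0 \<le> c (n - 2 * j) / real (n - 2 * j) ^ r" using cnn[of "n - 2 * j"] by simp
        have "C0 * (c (n - 2 * j) / real (n - 2 * j) ^ r) \<le> \<bar>C0\<bar> * (c (n - 2 * j) / real (n - 2 * j) ^ r)"
          by (rule mult_right_mono[OF abs_ge_self y])
        thus ?thesis by simp
      qed
      also have "\<dots> \<le> \<bar>C0\<bar> * (Ksh * c n * (2 ^ r / real n ^ r))"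
        using shift half cnn[of "n - 2 * j"] \<beta> by (intro mult_left_mono mult_mono) (auto simp: Ksh_def)
      finally show "norm (fps_nth B (n - 2 * j) - complex_of_real (c (n - 2 * j)) * S1) \<le> \<bar>C0\<bar> * (Ksh * c n * (2 ^ r / real n ^ r))"
        using E1 by linarith
      show "c n * norm (psi (1 / of_nat n) - (\<Sum>l<r. fps_nth (Btilde_even a \<beta> \<gamma> Bt j) l / of_nat n ^ l)) \<le> c n * (\<bar>C1\<bar> / real n ^ r)"
        using E2 cnn[of n] by (intro mult_left_mono) (auto intro: order.trans[OF _ divide_right_mono[of C1 "\<bar>C1\<bar>"]])
    qed
    also have "\<dots> = (\<bar>C0\<bar> * Ksh * 2 ^ r + \<bar>C1\<bar>) * (c n / real n ^ r)"
      by (simp add: algebra_simps)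
    finally show "norm (fps_nth B (2 * m - 2 * j) - complex_of_real (scale a \<beta> \<gamma> (2 * m)) *
            (\<Sum>l<r. fps_nth (Btilde_even a \<beta> \<gamma> Bt j) l / of_nat (2 * m) ^ l))
            \<le> (\<bar>C0\<bar> * Ksh * 2 ^ r + \<bar>C1\<bar>) * (scale a \<beta> \<gamma> (2 * m) / real (2 * m) ^ r)"
      by (simp add: n_def c_def)
  qed
qed

lemma X_power_factor_nth:
  fixes c :: "'a::comm_ring_1"
  assumes "l < p"
  shows "fps_nth (fps_const c * fps_X ^ p * b * e * Y) l = 0"
proof -
  have eq: "fps_const c * fps_X ^ p * b * e * Y = fps_X ^ p * (fps_const c * b * e * Y)" by (simp add: mult_ac)
  show ?thesis unfolding eq using assms by (simp add: fps_X_power_mult_nth)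
qed

lemma GK_X_power: "fps_nth (GK a \<beta> \<gamma> j * Y) l = 0" if "l < a * j"
  unfolding GK_def Let_def by (rule X_power_factor_nth[OF that])

lemma Btilde_H_nth:
  assumes a: "a > 0" and l: "l < r"
  shows "fps_nth (Btilde_H a \<beta> \<gamma> Bt H B) l = (\<Sum>j\<le>r. fps_nth (Btilde_even a \<beta> \<gamma> Bt j) l * fps_nth (fps_deriv H oo B) (2 * j))"
proof -
  have "fps_nth (Btilde_H a \<beta> \<gamma> Bt H B) l = (\<Sum>j. fps_nth (Btilde_even a \<beta> \<gamma> Bt j) l * fps_nth (fps_deriv H oo B) (2 * j))"
    by (simp add: Btilde_H_def)
  also have "\<dots> = (\<Sum>j\<le>r. fps_nth (Btilde_even a \<beta> \<gamma> Bt j) l * fps_nth (fps_deriv H oo B) (2 * j))"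
  proof (rule suminf_finite)
    fix j assume "j \<notin> {..r}"
    hence "r < j" by simp
    moreover have "j \<le> a * j" using a by simp
    ultimately have "l < a * j" using l by linarith
    thus "fps_nth (Btilde_even a \<beta> \<gamma> Bt j) l * fps_nth (fps_deriv H oo B) (2 * j) = 0"
      unfolding Btilde_even_GK by (simp add: GK_X_power)
  qed simp
  finally show ?thesis .
qed

lemma odd_vanish:
  fixes A B :: "complex fps"
  assumes Bodd: "\<And>n. odd n \<Longrightarrow> fps_nth B n = 0" and B0: "fps_nth B 0 = 0" and n: "even n"
  shows "(\<Sum>k\<le>2 * r. fps_nth A k * fps_nth B (n - k)) = (\<Sum>j\<le>r. fps_nth A (2 * j) * fps_nth B (n - 2 * j))"
proof (induction r)
  case 0 thus ?case by simp
next
  case (Suc r)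
  have z: "fps_nth B (n - Suc (2 * r)) = 0"
  proof (cases "Suc (2 * r) \<le> n")
    case True
    hence "odd (n - Suc (2 * r))" using n by auto
    thus ?thesis by (rule Bodd)
  next
    case False
    hence "n - Suc (2 * r) = 0" by simp
    thus ?thesis using B0 by simp
  qed
  have "2 * Suc r = Suc (Suc (2 * r))" by simp
  thus ?case using Suc z by simp
qed

theorem corollary13:
  fixes h :: "complex \<Rightarrow> complex" and H B Bt :: "complex fps"
    and a2 :: nat and \<beta> \<gamma> :: real
  assumes H: "h has_fps_expansion H"
    and B0: "fps_nth B 0 = 0"
    and Bodd: "\<And>n. odd n \<Longrightarrow> fps_nth B n = 0"
    and a2: "a2 > 0"
    and \<beta>: "\<beta> > 0"
    and Bt: "Bt \<noteq> 0"
    and Basymp: "asymp_exp_even (\<lambda>n. fps_nth B n) (scale a2 \<beta> \<gamma>) Bt"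
  shows "asymp_exp_even (\<lambda>n. fps_nth (H oo B) n) (scale a2 \<beta> \<gamma>) (Btilde_H a2 \<beta> \<gamma> Bt H B)"
proof -
  define c where "c = scale a2 \<beta> \<gamma>"
  have cnn: "c k \<ge> 0" for k unfolding c_def using \<beta> by (rule scale_nonneg)
  have cpos: "c k > 0" if "k \<ge> 1" for k unfolding c_def using \<beta> that by (rule scale_pos)
  obtain C0 N0 where C0: "\<And>m. m \<ge> N0 \<Longrightarrow> norm (fps_nth B (2 * m) - complex_of_real (c (2 * m)) * (\<Sum>l<0. fps_nth Bt l / of_nat (2 * m) ^ l))
            \<le> C0 * (c (2 * m) / real (2 * m) ^ 0)"
    using asymp_exp_evenD[OF Basymp, of 0] cnn unfolding c_def by blast
  define K where "K = max C0 0 + (\<Sum>m<N0. norm (fps_nth B (2 * m)) / c (2 * m))"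
  have Ksum: "(\<Sum>m<N0. norm (fps_nth B (2 * m)) / c (2 * m)) \<ge> 0"
    using cnn by (intro sum_nonneg divide_nonneg_nonneg) auto
  have K0: "K \<ge> 0" using Ksum by (simp add: K_def)
  have Kb: "norm (fps_nth B k) \<le> K * c k" for k
  proof (cases "even k")
    case False
    thus ?thesis using Bodd[of k] K0 cnn[of k] by simp
  next
    case True
    then obtain m where k: "k = 2 * m" by (elim evenE)
    show ?thesis
    proof (cases "m \<ge> N0")
      case True
      have "norm (fps_nth B k) \<le> C0 * c k" using C0[OF True] by (simp add: k)
      also have "\<dots> \<le> K * c k" using cnn[of k] Ksum by (intro mult_right_mono) (auto simp: K_def)
      finally show ?thesis .
    next
      case False
      show ?thesis
      proof (cases "m = 0")
        case True thus ?thesis using B0 K0 cnn[of k] by (simp add: k)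
      next
        case m0: False
        have cp: "c k > 0" using m0 by (intro cpos) (simp add: k)
        have "norm (fps_nth B (2 * m)) / c (2 * m) \<le> (\<Sum>m<N0. norm (fps_nth B (2 * m)) / c (2 * m))"
          using False cnn by (intro member_le_sum[where f = "\<lambda>m. norm (fps_nth B (2 * m)) / c (2 * m)"])
             (auto intro: divide_nonneg_nonneg)
        also have "\<dots> \<le> K" by (simp add: K_def)
        finally have "norm (fps_nth B k) / c k \<le> K" by (simp add: k)
        thus ?thesis using cp by (simp add: divide_simps)
      qed
    qed
  qed
  have Hr: "fps_conv_radius H > 0" using H by (simp add: has_fps_expansion_def)
  define A where "A = fps_deriv H oo B"
  define T where "T = Btilde_H a2 \<beta> \<gamma> Bt H B"
  show ?thesis
    unfolding asymp_exp_even_def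
  proof (intro allI)
    fix r :: nat
    obtain E NE where E: "\<And>n. n \<ge> NE \<Longrightarrow> norm (fps_nth (H oo B) n - (\<Sum>k\<le>2 * r. fps_nth A k * fps_nth B (n - k)))
            \<le> E * (c n / real n ^ r)"
      using main_error[OF \<beta> a2 Hr B0 K0, of \<gamma> r] Kb unfolding c_def A_def by blast
    have "\<forall>j. \<exists>C N. \<forall>m \<ge> N. norm (fps_nth B (2 * m - 2 * j) - complex_of_real (c (2 * m)) *
            (\<Sum>l<r. fps_nth (Btilde_even a2 \<beta> \<gamma> Bt j) l / of_nat (2 * m) ^ l))
            \<le> C * (c (2 * m) / real (2 * m) ^ r)"
      using per_j[OF \<beta> Basymp] unfolding c_def by blast
    from choice[OF this] obtain Cf where "\<forall>j. \<exists>N. \<forall>m \<ge> N. norm (fps_nth B (2 * m - 2 * j) - complex_of_real (c (2 * m)) *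
            (\<Sum>l<r. fps_nth (Btilde_even a2 \<beta> \<gamma> Bt j) l / of_nat (2 * m) ^ l))
            \<le> Cf j * (c (2 * m) / real (2 * m) ^ r)"
      by blast
    from choice[OF this] obtain Nf where CN0: "\<forall>j. \<forall>m \<ge> Nf j. norm (fps_nth B (2 * m - 2 * j) - complex_of_real (c (2 * m)) *
            (\<Sum>l<r. fps_nth (Btilde_even a2 \<beta> \<gamma> Bt j) l / of_nat (2 * m) ^ l))
            \<le> Cf j * (c (2 * m) / real (2 * m) ^ r)"
      by blast
    have CN: "\<And>j m. m \<ge> Nf j \<Longrightarrow> norm (fps_nth B (2 * m - 2 * j) - complex_of_real (c (2 * m)) *
            (\<Sum>l<r. fps_nth (Btilde_even a2 \<beta> \<gamma> Bt j) l / of_nat (2 * m) ^ l))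
            \<le> Cf j * (c (2 * m) / real (2 * m) ^ r)"
      using CN0 by blast
    define Ctot where "Ctot = E + (\<Sum>j\<le>r. norm (fps_nth A (2 * j)) * Cf j)"
    define Ntot where "Ntot = NE + (\<Sum>j\<le>r. Nf j) + 1"
    show "(\<lambda>m. fps_nth (H oo B) (2 * m) - complex_of_real (scale a2 \<beta> \<gamma> (2 * m)) *
              (\<Sum>l<r. fps_nth (Btilde_H a2 \<beta> \<gamma> Bt H B) l / of_nat (2 * m) ^ l))
          \<in> O(\<lambda>m. complex_of_real (scale a2 \<beta> \<gamma> (2 * m)) / of_nat (2 * m) ^ r)"
    proof (rule bigoI[where c = Ctot])
      show "eventually (\<lambda>m. norm (fps_nth (H oo B) (2 * m) - complex_of_real (scale a2 \<beta> \<gamma> (2 * m)) *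
              (\<Sum>l<r. fps_nth (Btilde_H a2 \<beta> \<gamma> Bt H B) l / of_nat (2 * m) ^ l))
          \<le> Ctot * norm (complex_of_real (scale a2 \<beta> \<gamma> (2 * m)) / of_nat (2 * m) ^ r)) at_top"
        unfolding eventually_at_top_linorder
      proof (intro exI[of _ Ntot] allI impI)
        fix m assume m: "m \<ge> Ntot"
        define n where "n = 2 * m"
        define X where "X = c n / real n ^ r"
        have Xn: "norm (complex_of_real (scale a2 \<beta> \<gamma> (2 * m)) / of_nat (2 * m) ^ r) = X"
          using cnn[of n] by (simp add: X_def c_def n_def norm_divide norm_power norm_mult)
        have mNE: "n \<ge> NE" using m by (simp add: n_def Ntot_def)
        have mNf: "m \<ge> Nf j" if "j \<le> r" for j
        proof -
          have "Nf j \<le> (\<Sum>j\<le>r. Nf j)" using that by (intro member_le_sum) auto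
          thus ?thesis using m by (simp add: Ntot_def)
        qed
        define D where "D = (\<lambda>j. fps_nth B (n - 2 * j) - complex_of_real (c n) *
            (\<Sum>l<r. fps_nth (Btilde_even a2 \<beta> \<gamma> Bt j) l / of_nat n ^ l))"
        have Dj: "norm (D j) \<le> Cf j * X" if "j \<le> r" for j
          using CN[OF mNf[OF that]] by (simp add: D_def X_def n_def)
        have SA: "(\<Sum>k\<le>2 * r. fps_nth A k * fps_nth B (n - k)) = (\<Sum>j\<le>r. fps_nth A (2 * j) * fps_nth B (n - 2 * j))"
        proof -
          have evn: "even n" unfolding n_def by simp
          show ?thesis by (rule odd_vanish[OF Bodd B0 evn])
        qed
        have ST: "complex_of_real (c n) * (\<Sum>l<r. fps_nth T l / of_nat n ^ l)
            = (\<Sum>j\<le>r. fps_nth A (2 * j) * (complex_of_real (c n) * (\<Sum>l<r. fps_nth (Btilde_even a2 \<beta> \<gamma> Bt j) l / of_nat n ^ l)))"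
        proof -
          have "(\<Sum>l<r. fps_nth T l / of_nat n ^ l) = (\<Sum>l<r. (\<Sum>j\<le>r. fps_nth (Btilde_even a2 \<beta> \<gamma> Bt j) l * fps_nth A (2 * j)) / of_nat n ^ l)"
            by (intro sum.cong refl) (simp add: T_def A_def Btilde_H_nth[OF a2])
          also have "\<dots> = (\<Sum>l<r. \<Sum>j\<le>r. fps_nth A (2 * j) * (fps_nth (Btilde_even a2 \<beta> \<gamma> Bt j) l / of_nat n ^ l))"
            by (simp add: sum_divide_distrib mult_ac)
          also have "\<dots> = (\<Sum>j\<le>r. \<Sum>l<r. fps_nth A (2 * j) * (fps_nth (Btilde_even a2 \<beta> \<gamma> Bt j) l / of_nat n ^ l))"
            by (rule sum.swap)
          also have "\<dots> = (\<Sum>j\<le>r. fps_nth A (2 * j) * (\<Sum>l<r. fps_nth (Btilde_even a2 \<beta> \<gamma> Bt j) l / of_nat n ^ l))"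
            by (simp add: sum_distrib_left)
          finally show ?thesis by (simp add: sum_distrib_left mult_ac)
        qed
        have eq: "fps_nth (H oo B) n - complex_of_real (c n) * (\<Sum>l<r. fps_nth T l / of_nat n ^ l)
            = (fps_nth (H oo B) n - (\<Sum>k\<le>2 * r. fps_nth A k * fps_nth B (n - k))) + (\<Sum>j\<le>r. fps_nth A (2 * j) * D j)"
          unfolding ST SA D_def by (simp add: sum_subtractf algebra_simps)
        have "norm (fps_nth (H oo B) n - complex_of_real (c n) * (\<Sum>l<r. fps_nth T l / of_nat n ^ l))
            \<le> norm (fps_nth (H oo B) n - (\<Sum>k\<le>2 * r. fps_nth A k * fps_nth B (n - k))) + norm (\<Sum>j\<le>r. fps_nth A (2 * j) * D j)"
          unfolding eq by (rule norm_triangle_ineq)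
        also have "norm (\<Sum>j\<le>r. fps_nth A (2 * j) * D j) \<le> (\<Sum>j\<le>r. norm (fps_nth A (2 * j)) * (Cf j * X))"
          by (rule order.trans[OF norm_sum]) (auto simp: norm_mult intro!: sum_mono mult_left_mono Dj)
        also have "norm (fps_nth (H oo B) n - (\<Sum>k\<le>2 * r. fps_nth A k * fps_nth B (n - k))) \<le> E * X"
          using E[OF mNE] by (simp add: X_def)
        finally have "norm (fps_nth (H oo B) n - complex_of_real (c n) * (\<Sum>l<r. fps_nth T l / of_nat n ^ l))
            \<le> E * X + (\<Sum>j\<le>r. norm (fps_nth A (2 * j)) * (Cf j * X))" by simp
        also have "\<dots> = Ctot * X" by (simp add: Ctot_def sum_distrib_right sum_distrib_left algebra_simps)
        finally show "norm (fps_nth (H oo B) (2 * m) - complex_of_real (scale a2 \<beta> \<gamma> (2 * m)) *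
              (\<Sum>l<r. fps_nth (Btilde_H a2 \<beta> \<gamma> Bt H B) l / of_nat (2 * m) ^ l))
          \<le> Ctot * norm (complex_of_real (scale a2 \<beta> \<gamma> (2 * m)) / of_nat (2 * m) ^ r)"
          unfolding Xn by (simp add: n_def c_def T_def)
      qed
    qed
  qed
qed

end
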